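(* Let $n\ge0$. The homomorphism of filtered algebras $$\mathcal U(\mathrm{sl}_2)/(C-n(n+2))\longrightarrow\mathcal D(\mathcal O_n),\qquad e\mapsto x,\quad h\mapsto 2x\frac{d}{dx}-n,\quad f\mapsto -x\frac{d^2}{dx^2}+n\frac{d}{dx},$$ is surjective, and its kernel is the two-sided ideal generated by (the image of) $e^{n+1}$.
   Context: $k$ is a field of characteristic zero, $\mathcal O_n=k[x]/(x^{n+1})$, $x$ acts by multiplication and $\frac d{dx}$ by $x^m\mapsto mx^{m-1}$. $\mathcal D(\mathcal O_n)=\bigcup_p\mathcal D^p(\mathcal O_n)$ with $\mathcal D^p(\mathcal O_n)=\{\delta\in\operatorname{End}_k(\mathcal O_n):[f_0,[f_1,\dots,[f_p,\delta]\dots]]=0\ \forall f_i\in\mathcal O_n\}$ (order filtration). $\mathrm{sl}_2$ has basis $e,h,f$ with $[e,f]=h$, $[h,e]=2e$, $[h,f]=-2f$; $C=h^2+2(ef+fe)$ is the Casimir element. $\mathcal U(\mathrm{sl}_2)$ and its quotient are filtered by the filtration induced from the Lie algebra filtration $\langle e\rangle\subset\langle e,h\rangle\subset\langle e,h,f\rangle$, i.e. $e,h,f$ have orders $0,1,2$ respectively. *)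

theory Defs
  imports "HOL-Computational_Algebra.Polynomial"
begin

text \<open>O_n is realised as the polynomials of degree at most n; the product is
  the polynomial product reduced modulo x^(n+1).\<close>

definition On :: "nat \<Rightarrow> 'k::field poly set" where
  "On n = {p. degree p \<le> n}"

definition omult :: "nat \<Rightarrow> 'k::field poly \<Rightarrow> 'k poly \<Rightarrow> 'k poly" where
  "omult n p q = (p * q) mod monom 1 (Suc n)"

text \<open>k-linear endomorphisms of O_n, represented as functions on polynomials that are
  zero outside O_n (so that equality of endomorphisms is equality of functions).\<close>

definition is_End :: "nat \<Rightarrow> ('k::field poly \<Rightarrow> 'k poly) \<Rightarrow> bool" where
  "is_End n \<delta> \<longleftrightarrow>
     (\<forall>p\<in>On n. \<delta> p \<in> On n) \<and>
     (\<forall>p\<in>On n. \<forall>q\<in>On n. \<delta> (p + q) = \<delta> p + \<delta> q) \<and>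
     (\<forall>c. \<forall>p\<in>On n. \<delta> (smult c p) = smult c (\<delta> p)) \<and>
     (\<forall>p. p \<notin> On n \<longrightarrow> \<delta> p = 0)"

definition restr :: "nat \<Rightarrow> ('k::field poly \<Rightarrow> 'k poly) \<Rightarrow> 'k poly \<Rightarrow> 'k poly" where
  "restr n g = (\<lambda>p. if p \<in> On n then g p else 0)"

definition Lmul :: "nat \<Rightarrow> 'k::field poly \<Rightarrow> 'k poly \<Rightarrow> 'k poly" where
  "Lmul n f = restr n (\<lambda>p. omult n f p)"

definition comm :: "('k::field poly \<Rightarrow> 'k poly) \<Rightarrow> ('k poly \<Rightarrow> 'k poly) \<Rightarrow> 'k poly \<Rightarrow> 'k poly" where
  "comm a b = (\<lambda>p. a (b p) - b (a p))"

fun iter_comm :: "nat \<Rightarrow> 'k::field poly list \<Rightarrow> ('k poly \<Rightarrow> 'k poly) \<Rightarrow> 'k poly \<Rightarrow> 'k poly" where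
  "iter_comm n [] d = d"
| "iter_comm n (f # fs) d = comm (Lmul n f) (iter_comm n fs d)"

definition Diff :: "nat \<Rightarrow> nat \<Rightarrow> ('k::field poly \<Rightarrow> 'k poly) set" where
  "Diff n p = {\<delta>. is_End n \<delta> \<and>
      (\<forall>fs. length fs = Suc p \<longrightarrow> set fs \<subseteq> On n \<longrightarrow> iter_comm n fs \<delta> = (\<lambda>_. 0))}"

definition Diff_ops :: "nat \<Rightarrow> ('k::field poly \<Rightarrow> 'k poly) set" where
  "Diff_ops n = (\<Union>p. Diff n p)"

definition Idn :: "nat \<Rightarrow> 'k::field poly \<Rightarrow> 'k poly" where
  "Idn n = restr n id"

definition Xop :: "nat \<Rightarrow> 'k::field poly \<Rightarrow> 'k poly" where
  "Xop n = Lmul n [:0, 1:]"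

definition Dop :: "nat \<Rightarrow> 'k::field poly \<Rightarrow> 'k poly" where
  "Dop n = restr n pderiv"

datatype gen = E | H | F

fun gen_op :: "nat \<Rightarrow> gen \<Rightarrow> 'k::field poly \<Rightarrow> 'k poly" where
  "gen_op n E = Xop n"
| "gen_op n H = (\<lambda>p. smult 2 (Xop n (Dop n p)) - smult (of_nat n) (Idn n p))"
| "gen_op n F = (\<lambda>p. - Xop n (Dop n (Dop n p)) + smult (of_nat n) (Dop n p))"

text \<open>Elements: functions from words over {e,h,f} to k; genuine elements are those of
  finite support.\<close>
type_synonym 'k fa = "gen list \<Rightarrow> 'k"

definition fin_supp :: "'k::zero fa \<Rightarrow> bool" where
  "fin_supp a \<longleftrightarrow> finite {w. a w \<noteq> 0}"

definition fa_zero :: "'k::zero fa" where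
  "fa_zero = (\<lambda>_. 0)"

definition fa_add :: "'k::plus fa \<Rightarrow> 'k fa \<Rightarrow> 'k fa" where
  "fa_add a b = (\<lambda>w. a w + b w)"

definition fa_smult :: "'k::times \<Rightarrow> 'k fa \<Rightarrow> 'k fa" where
  "fa_smult c a = (\<lambda>w. c * a w)"

definition fa_sub :: "'k::minus fa \<Rightarrow> 'k fa \<Rightarrow> 'k fa" where
  "fa_sub a b = (\<lambda>w. a w - b w)"

definition fa_mul :: "'k::comm_semiring_1 fa \<Rightarrow> 'k fa \<Rightarrow> 'k fa" where
  "fa_mul a b = (\<lambda>w. \<Sum>i\<le>length w. a (take i w) * b (drop i w))"

definition fa_word :: "gen list \<Rightarrow> 'k::{zero,one} fa" where
  "fa_word w = (\<lambda>u. if u = w then 1 else 0)"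

definition fa_gen :: "gen \<Rightarrow> 'k::{zero,one} fa" where
  "fa_gen g = fa_word [g]"

definition fa_const :: "'k::zero \<Rightarrow> 'k fa" where
  "fa_const c = (\<lambda>u. if u = [] then c else 0)"

inductive_set fa_ideal :: "'k::comm_ring_1 fa set \<Rightarrow> 'k fa set" for S where
  gen: "g \<in> S \<Longrightarrow> g \<in> fa_ideal S"
| zero: "fa_zero \<in> fa_ideal S"
| add: "a \<in> fa_ideal S \<Longrightarrow> b \<in> fa_ideal S \<Longrightarrow> fa_add a b \<in> fa_ideal S"
| mul: "a \<in> fa_ideal S \<Longrightarrow> fin_supp u \<Longrightarrow> fin_supp v \<Longrightarrow> fa_mul (fa_mul u a) v \<in> fa_ideal S"

definition fa_bracket :: "'k::comm_ring_1 fa \<Rightarrow> 'k fa \<Rightarrow> 'k fa" where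
  "fa_bracket a b = fa_sub (fa_mul a b) (fa_mul b a)"

definition sl2_relations :: "'k::comm_ring_1 fa set" where
  "sl2_relations =
    {fa_sub (fa_bracket (fa_gen E) (fa_gen F)) (fa_gen H),
     fa_sub (fa_bracket (fa_gen H) (fa_gen E)) (fa_smult 2 (fa_gen E)),
     fa_add (fa_bracket (fa_gen H) (fa_gen F)) (fa_smult 2 (fa_gen F))}"

definition casimir :: "'k::comm_ring_1 fa" where
  "casimir = fa_add (fa_mul (fa_gen H) (fa_gen H))
     (fa_smult 2 (fa_add (fa_mul (fa_gen E) (fa_gen F)) (fa_mul (fa_gen F) (fa_gen E))))"

fun gen_weight :: "gen \<Rightarrow> nat" where
  "gen_weight E = 0" | "gen_weight H = 1" | "gen_weight F = 2"

definition weight :: "gen list \<Rightarrow> nat" where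
  "weight w = sum_list (map gen_weight w)"

fun word_op :: "nat \<Rightarrow> gen list \<Rightarrow> 'k::field poly \<Rightarrow> 'k poly" where
  "word_op n [] = Idn n"
| "word_op n (g # w) = (\<lambda>p. gen_op n g (word_op n w p))"

definition fa_eval :: "nat \<Rightarrow> 'k::field fa \<Rightarrow> 'k poly \<Rightarrow> 'k poly" where
  "fa_eval n a = (\<lambda>p. \<Sum>w\<in>{w. a w \<noteq> 0}. smult (a w) (word_op n w p))"

end

theory Submission
  imports Defs
begin

lemma fa_mul_assoc:
  "fa_mul (fa_mul a b) c = fa_mul a (fa_mul (b::'k::comm_semiring_1 fa) c)"
proof
  fix w :: "gen list"
  define L where "L = length w"
  define g where "g = (\<lambda>j m. a (take j w) * b (take m (drop j w)) * c (drop m (drop j w)))"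
  have "fa_mul (fa_mul a b) c w = (\<Sum>i\<le>L. \<Sum>j\<le>i. g j (i - j))"
    unfolding fa_mul_def L_def g_def sum_distrib_right
    apply (rule sum.cong[OF refl])
    apply (subgoal_tac "length (take x w) = x")
     apply (simp only:)
     apply (rule sum.cong[OF refl])
     apply (simp add: drop_take)
    apply simp
    done
  also have "\<dots> = (\<Sum>(j,m)\<in>{(j,m). j + m \<le> L}. g j m)"
    by (rule sum.triangle_reindex_eq[symmetric])
  also have "\<dots> = (\<Sum>j\<le>L. \<Sum>m\<le>L - j. g j m)"
    by (simp add: sum.Sigma) (rule sum.cong; auto)
  also have "\<dots> = fa_mul a (fa_mul b c) w"
    unfolding fa_mul_def L_def g_def
    by (simp add: sum_distrib_left mult.assoc)
  finally show "fa_mul (fa_mul a b) c w = fa_mul a (fa_mul b c) w" .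
qed

lemma fin_supp_fa_mul:
  assumes "fin_supp a" "fin_supp b"
  shows "fin_supp (fa_mul a (b::'k::comm_semiring_1 fa))"
proof -
  have "{w. fa_mul a b w \<noteq> 0} \<subseteq> (\<lambda>(u,v). u @ v) ` ({u. a u \<noteq> 0} \<times> {v. b v \<noteq> 0})"
  proof
    fix w assume "w \<in> {w. fa_mul a b w \<noteq> 0}"
    then have "(\<Sum>i\<le>length w. a (take i w) * b (drop i w)) \<noteq> 0"
      unfolding fa_mul_def by simp
    then obtain i where "a (take i w) * b (drop i w) \<noteq> 0"
      by (metis (mono_tags, lifting) sum.neutral)
    then have "a (take i w) \<noteq> 0" "b (drop i w) \<noteq> 0" by auto
    then show "w \<in> (\<lambda>(u,v). u @ v) ` ({u. a u \<noteq> 0} \<times> {v. b v \<noteq> 0})"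
      by (intro image_eqI[where x="(take i w, drop i w)"]) auto
  qed
  moreover have "finite ((\<lambda>(u,v). u @ v) ` ({u. a u \<noteq> 0} \<times> {v. b v \<noteq> 0}))"
    using assms unfolding fin_supp_def by auto
  ultimately show ?thesis unfolding fin_supp_def by (rule finite_subset)
qed

lemma fin_supp_fa_add: "fin_supp a \<Longrightarrow> fin_supp b \<Longrightarrow> fin_supp (fa_add a (b::'k::monoid_add fa))"
  unfolding fin_supp_def fa_add_def
  by (rule finite_subset[of _ "{w. a w \<noteq> 0} \<union> {w. b w \<noteq> 0}"]) auto

lemma fin_supp_fa_sub: "fin_supp a \<Longrightarrow> fin_supp b \<Longrightarrow> fin_supp (fa_sub a (b::'k::group_add fa))"
  unfolding fin_supp_def fa_sub_def
  by (rule finite_subset[of _ "{w. a w \<noteq> 0} \<union> {w. b w \<noteq> 0}"]) auto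

lemma fin_supp_fa_smult: "fin_supp a \<Longrightarrow> fin_supp (fa_smult c (a::'k::mult_zero fa))"
  unfolding fin_supp_def fa_smult_def
  by (rule finite_subset[of _ "{w. a w \<noteq> 0}"]) auto

lemma fin_supp_fa_zero: "fin_supp fa_zero"
  unfolding fin_supp_def fa_zero_def by simp

lemma fin_supp_fa_word: "fin_supp (fa_word w :: 'k::zero_neq_one fa)"
  unfolding fin_supp_def fa_word_def by simp

lemma fin_supp_fa_const: "fin_supp (fa_const c)"
  unfolding fin_supp_def fa_const_def
  by (rule finite_subset[of _ "{[]}"]) auto

lemma fin_supp_fa_neg: "fin_supp a \<Longrightarrow> fin_supp (\<lambda>w. - (a::'k::group_add fa) w)"
  unfolding fin_supp_def by simp

lemma fa_mul_const_left: "fa_mul (fa_const c) a = fa_smult c (a::'k::comm_semiring_1 fa)"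
proof
  fix w :: "gen list"
  have "fa_mul (fa_const c) a w = (\<Sum>i\<le>length w. if i = 0 then c * a w else 0)"
    unfolding fa_mul_def fa_const_def by (intro sum.cong) auto
  also have "\<dots> = c * a w" by (simp add: sum.delta)
  finally show "fa_mul (fa_const c) a w = fa_smult c a w" by (simp add: fa_smult_def)
qed

lemma fa_mul_const_right: "fa_mul a (fa_const c) = fa_smult c (a::'k::comm_semiring_1 fa)"
proof
  fix w :: "gen list"
  have "fa_mul a (fa_const c) w = (\<Sum>i\<le>length w. if i = length w then c * a w else 0)"
    unfolding fa_mul_def fa_const_def by (intro sum.cong) (auto simp: mult.commute)
  also have "\<dots> = c * a w" by (simp add: sum.delta)
  finally show "fa_mul a (fa_const c) w = fa_smult c a w" by (simp add: fa_smult_def)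
qed

lemma fa_mul_add_left: "fa_mul (fa_add a b) c = fa_add (fa_mul a c) (fa_mul b (c::'k::comm_semiring_1 fa))"
  unfolding fa_mul_def fa_add_def by (simp add: distrib_right sum.distrib)

lemma fa_mul_add_right: "fa_mul a (fa_add b c) = fa_add (fa_mul a b) (fa_mul a (c::'k::comm_semiring_1 fa))"
  unfolding fa_mul_def fa_add_def by (simp add: distrib_left sum.distrib)

lemma fa_mul_word: "fa_mul (fa_word u) (fa_word v) = (fa_word (u @ v) :: 'k::comm_semiring_1 fa)"
proof
  fix w :: "gen list"
  have "fa_mul (fa_word u) (fa_word v) w = (\<Sum>i\<le>length w. if i = length u \<and> w = u @ v then 1 else (0::'k))"
    unfolding fa_mul_def fa_word_def
    by (intro sum.cong refl) (auto simp: append_eq_conv_conj)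
  also have "\<dots> = fa_word (u @ v) w"
    by (auto simp: sum.delta fa_word_def)
  finally show "fa_mul (fa_word u) (fa_word v) w = (fa_word (u @ v) w :: 'k)" .
qed

typedef (overloaded) ('k::comm_ring_1) FA = "{a :: 'k fa. fin_supp a}"
  morphisms repFA absFA
  by (rule exI[of _ fa_zero]) (simp add: fin_supp_fa_zero)

setup_lifting type_definition_FA

instantiation FA :: (comm_ring_1) ring_1
begin
lift_definition zero_FA :: "'a FA" is fa_zero by (rule fin_supp_fa_zero)
lift_definition one_FA :: "'a FA" is "fa_const 1" by (rule fin_supp_fa_const)
lift_definition plus_FA :: "'a FA \<Rightarrow> 'a FA \<Rightarrow> 'a FA" is fa_add by (rule fin_supp_fa_add)
lift_definition minus_FA :: "'a FA \<Rightarrow> 'a FA \<Rightarrow> 'a FA" is fa_sub by (rule fin_supp_fa_sub)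
lift_definition uminus_FA :: "'a FA \<Rightarrow> 'a FA" is "\<lambda>a w. - a w" by (rule fin_supp_fa_neg)
lift_definition times_FA :: "'a FA \<Rightarrow> 'a FA \<Rightarrow> 'a FA" is fa_mul by (rule fin_supp_fa_mul)
instance
proof
  fix a b c :: "'a FA"
  show "a * b * c = a * (b * c)" by transfer (rule fa_mul_assoc)
  show "a + b + c = a + (b + c)" by transfer (simp add: fa_add_def add.assoc)
  show "a + b = b + a" by transfer (simp add: fa_add_def add.commute)
  show "0 + a = a" by transfer (simp add: fa_add_def fa_zero_def)
  show "- a + a = 0" by transfer (simp add: fa_zero_def fa_add_def)
  show "a - b = a + - b" by transfer (simp add: fa_add_def fa_sub_def)
  show "1 * a = a" by transfer (simp add: fa_mul_const_left fa_smult_def)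
  show "a * 1 = a" by transfer (simp add: fa_mul_const_right fa_smult_def)
  show "(a + b) * c = a * c + b * c" by transfer (rule fa_mul_add_left)
  show "a * (b + c) = a * b + a * c" by transfer (rule fa_mul_add_right)
  show "(0::'a FA) \<noteq> 1" by transfer (auto simp: fa_zero_def fa_const_def fun_eq_iff)
qed
end

lemma smult_sum_right: "smult c (sum f A) = (\<Sum>a\<in>A. smult c (f a))"
  by (induction A rule: infinite_finite_induct) (simp_all add: smult_add_right)

lemma On_iff: "p \<in> On n \<longleftrightarrow> degree p \<le> n"
  by (simp add: On_def)

lemma coeff_On_gt: "p \<in> On n \<Longrightarrow> n < i \<Longrightarrow> coeff p i = 0"
  by (simp add: On_def coeff_eq_0)

lemma On_by_coeff: "(\<And>i. n < i \<Longrightarrow> coeff p i = 0) \<Longrightarrow> p \<in> On n"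
  by (simp add: On_def degree_le)

lemma mod_monom_cutoff: "(r::'k::field poly) mod monom 1 (Suc n) = poly_cutoff (Suc n) r"
proof -
  have "monom 1 (Suc n) dvd r - poly_cutoff (Suc n) r"
    by (simp add: monom_1_dvd_iff' coeff_poly_cutoff)
  then have "r mod monom 1 (Suc n) = poly_cutoff (Suc n) r mod monom 1 (Suc n)"
    by (simp add: mod_eq_dvd_iff)
  also have "\<dots> = poly_cutoff (Suc n) r"
  proof (rule mod_poly_less)
    have "degree (poly_cutoff (Suc n) r) \<le> n"
      by (rule degree_le) (simp add: coeff_poly_cutoff)
    then show "degree (poly_cutoff (Suc n) r) < degree (monom (1::'k) (Suc n))"
      by (simp add: degree_monom_eq)
  qed
  finally show ?thesis .
qed

lemma coeff_omult: "coeff (omult n p q) i = (if i \<le> n then coeff (p * q) i else 0)"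
  by (simp add: omult_def mod_monom_cutoff coeff_poly_cutoff)

lemma On_zero[simp]: "0 \<in> On n" by (simp add: On_def)
lemma On_add[simp]: "p \<in> On n \<Longrightarrow> q \<in> On n \<Longrightarrow> p + q \<in> On n"
  by (simp add: On_def degree_add_le)
lemma On_diff[simp]: "p \<in> On n \<Longrightarrow> q \<in> On n \<Longrightarrow> p - q \<in> On n"
  by (simp add: On_def degree_diff_le)
lemma On_uminus[simp]: "p \<in> On n \<Longrightarrow> - p \<in> On n"
  by (simp add: On_def)
lemma On_smult[simp]: "p \<in> On n \<Longrightarrow> smult c p \<in> On n"
  by (simp add: On_def)
lemma On_monom[simp]: "m \<le> n \<Longrightarrow> monom c m \<in> On n"
  by (simp add: On_def degree_monom_le le_trans[OF degree_monom_le])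
lemma On_omult[simp]: "omult n p q \<in> On n"
  by (rule On_by_coeff) (simp add: coeff_omult)
lemma On_sum[simp]: "(\<And>i. i \<in> A \<Longrightarrow> f i \<in> On n) \<Longrightarrow> sum f A \<in> On n"
  by (induction A rule: infinite_finite_induct) auto

lemma Lmul_On[simp]: "Lmul n f p \<in> On n"
  by (simp add: Lmul_def restr_def)

lemma coeff_Lmul: "p \<in> On n \<Longrightarrow> coeff (Lmul n f p) i = (if i \<le> n then coeff (f * p) i else 0)"
  by (simp add: Lmul_def restr_def coeff_omult)

lemma Lmul_out: "p \<notin> On n \<Longrightarrow> Lmul n f p = 0"
  by (simp add: Lmul_def restr_def)

lemma coeff_Xop: "p \<in> On n \<Longrightarrow> coeff (Xop n p) i = (if 0 < i \<and> i \<le> n then coeff p (i - 1) else 0)"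
  by (cases i) (auto simp: Xop_def coeff_Lmul coeff_pCons)

lemma Xop_out: "p \<notin> On n \<Longrightarrow> Xop n p = 0"
  by (simp add: Xop_def Lmul_out)

lemma Xop_On[simp]: "Xop n p \<in> On n"
  by (simp add: Xop_def)

lemma pderiv_On[simp]: "p \<in> On n \<Longrightarrow> pderiv p \<in> On n"
  by (rule On_by_coeff) (simp add: coeff_pderiv coeff_On_gt)

lemma Dop_On[simp]: "Dop n p \<in> On n"
  by (auto simp: Dop_def restr_def)

lemma Xop_zero[simp]: "Xop n 0 = 0"
  by (simp add: Xop_def Lmul_def restr_def omult_def)

lemma Dop_zero[simp]: "Dop n 0 = 0"
  by (simp add: Dop_def restr_def)

lemma Dop_out: "p \<notin> On n \<Longrightarrow> Dop n p = 0"
  by (simp add: Dop_def restr_def)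

lemma Dop_in: "p \<in> On n \<Longrightarrow> Dop n p = pderiv p"
  by (simp add: Dop_def restr_def)

lemma Idn_in: "p \<in> On n \<Longrightarrow> Idn n p = p"
  by (simp add: Idn_def restr_def)

lemma Idn_out: "p \<notin> On n \<Longrightarrow> Idn n p = 0"
  by (simp add: Idn_def restr_def)

lemma gen_op_out: "p \<notin> On n \<Longrightarrow> gen_op n g p = 0"
  by (cases g) (simp_all add: Xop_out Dop_out Idn_out)

lemma gen_op_On[simp]: "gen_op n g p \<in> On n"
  by (cases g) (auto simp: Idn_def restr_def)

lemma coeff_gen_E: "p \<in> On n \<Longrightarrow>
   coeff (gen_op n E p) i = (if 0 < i \<and> i \<le> n then coeff p (i - 1) else 0)"
  by (simp add: coeff_Xop)

lemma coeff_gen_H: "(p::'k::field poly) \<in> On n \<Longrightarrow>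
   coeff (gen_op n H p) i = (of_nat (2 * i) - of_nat n) * coeff p i"
proof -
  assume p: "p \<in> On n"
  show ?thesis
  proof (cases "i \<le> n")
    case True
    then show ?thesis using p
      by (cases i) (auto simp: coeff_Xop Dop_in Idn_in coeff_pderiv algebra_simps of_nat_mult)
  next
    case False
    then show ?thesis using p
      by (auto simp: coeff_Xop Dop_in Idn_in coeff_On_gt)
  qed
qed

lemma coeff_gen_F: "(p::'k::field poly) \<in> On n \<Longrightarrow>
   coeff (gen_op n F p) i = of_nat (Suc i) * (of_nat n - of_nat i) * coeff p (Suc i)"
proof -
  assume p: "p \<in> On n"
  show ?thesis
  proof (cases "i \<le> n")
    case True
    then show ?thesis using p
      by (cases i) (auto simp: coeff_Xop Dop_in coeff_pderiv algebra_simps)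
  next
    case False
    then show ?thesis using p
      by (auto simp: coeff_Xop Dop_in coeff_On_gt coeff_pderiv)
  qed
qed


lemma gen_op_add: "p \<in> On n \<Longrightarrow> q \<in> On n \<Longrightarrow>
    gen_op n g (p + q) = gen_op n g p + (gen_op n g q :: 'k::field poly)"
  by (cases g) (auto simp: poly_eq_iff coeff_gen_E coeff_gen_H coeff_gen_F algebra_simps
        simp del: gen_op.simps)

lemma gen_op_smult: "p \<in> On n \<Longrightarrow>
    gen_op n g (smult c p) = smult c (gen_op n g p :: 'k::field poly)"
  by (cases g) (auto simp: poly_eq_iff coeff_gen_E coeff_gen_H coeff_gen_F algebra_simps
        simp del: gen_op.simps)

lemma End_zero: "is_End n \<delta> \<Longrightarrow> \<delta> 0 = 0"
  unfolding is_End_def by (metis On_zero add_0 add_right_imp_eq)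

lemma End_On: "is_End n \<delta> \<Longrightarrow> \<delta> p \<in> On n"
  unfolding is_End_def by (metis On_zero)

lemma End_out: "is_End n \<delta> \<Longrightarrow> p \<notin> On n \<Longrightarrow> \<delta> p = 0"
  unfolding is_End_def by blast

lemma End_add: "is_End n \<delta> \<Longrightarrow> p \<in> On n \<Longrightarrow> q \<in> On n \<Longrightarrow> \<delta> (p + q) = \<delta> p + \<delta> q"
  unfolding is_End_def by blast

lemma End_smult: "is_End n \<delta> \<Longrightarrow> p \<in> On n \<Longrightarrow> \<delta> (smult c p) = smult c (\<delta> p)"
  unfolding is_End_def by blast

lemma End_uminus: "is_End n \<delta> \<Longrightarrow> p \<in> On n \<Longrightarrow> \<delta> (- p) = - \<delta> (p::'k::field poly)"
  using End_smult[of n \<delta> p "-1"] by simp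

lemma End_diff: "is_End n \<delta> \<Longrightarrow> p \<in> On n \<Longrightarrow> q \<in> On n \<Longrightarrow> \<delta> (p - q) = \<delta> p - \<delta> (q::'k::field poly)"
  using End_add[of n \<delta> p "- q"] End_uminus[of n \<delta> q] by simp

lemma End_sum: "is_End n \<delta> \<Longrightarrow> (\<And>i. i \<in> A \<Longrightarrow> f i \<in> On n) \<Longrightarrow> \<delta> (sum f A) = (\<Sum>i\<in>A. \<delta> (f i))"
proof (induction A rule: infinite_finite_induct)
  case (infinite A) then show ?case by (simp add: End_zero)
next
  case empty then show ?case by (simp add: End_zero)
next
  case (insert x F)
  then show ?case by (simp add: End_add)
qed

lemma is_EndI:
  assumes "\<And>p. \<delta> p \<in> On n" "\<And>p q. p \<in> On n \<Longrightarrow> q \<in> On n \<Longrightarrow> \<delta> (p + q) = \<delta> p + \<delta> q"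
    "\<And>c p. p \<in> On n \<Longrightarrow> \<delta> (smult c p) = smult c (\<delta> p)"
    "\<And>p. p \<notin> On n \<Longrightarrow> \<delta> p = 0"
  shows "is_End n \<delta>"
  using assms unfolding is_End_def by blast

lemma End_gen_op: "is_End n (gen_op n g :: 'k::field poly \<Rightarrow> _)"
  by (rule is_EndI) (auto simp: gen_op_add gen_op_smult gen_op_out simp del: gen_op.simps)

lemma End_Idn: "is_End n (Idn n)"
  by (rule is_EndI) (auto simp: Idn_def restr_def)

lemma End_comp: "is_End n A \<Longrightarrow> is_End n B \<Longrightarrow> is_End n (\<lambda>p. A (B p))"
  by (rule is_EndI) (auto simp: End_On End_add End_smult End_out End_zero)

lemma End_word_op: "is_End n (word_op n w :: 'k::field poly \<Rightarrow> _)"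
  by (induction w) (auto simp: End_Idn intro: End_comp[OF End_gen_op] simp del: gen_op.simps)

lemma word_op_append: "word_op n (u @ v) p = word_op n u (word_op n v (p :: 'k::field poly))"
proof (induction u)
  case Nil
  show ?case by (simp add: Idn_in End_On[OF End_word_op])
qed simp

lemma poly_On_sum: "p \<in> On n \<Longrightarrow> p = (\<Sum>m\<le>n. smult (coeff p m) (monom 1 m))"
  by (simp add: smult_monom poly_as_sum_of_monoms' On_iff)

lemma End_eqI:
  assumes "is_End n A" "is_End n B" "\<And>m. m \<le> n \<Longrightarrow> A (monom 1 m) = B (monom (1::'k::field) m)"
  shows "A = B"
proof
  fix p :: "'k poly"
  show "A p = B p"
  proof (cases "p \<in> On n")
    case True
    then have "A p = A (\<Sum>m\<le>n. smult (coeff p m) (monom 1 m))" by (subst poly_On_sum) auto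
    also have "\<dots> = (\<Sum>m\<le>n. smult (coeff p m) (A (monom 1 m)))"
      by (subst End_sum[OF assms(1)]) (auto simp: End_smult[OF assms(1)])
    also have "\<dots> = (\<Sum>m\<le>n. smult (coeff p m) (B (monom 1 m)))"
      using assms(3) by simp
    also have "\<dots> = B (\<Sum>m\<le>n. smult (coeff p m) (monom 1 m))"
      by (subst End_sum[OF assms(2)]) (auto simp: End_smult[OF assms(2)])
    also have "\<dots> = B p" using True by (subst (2) poly_On_sum) auto
    finally show ?thesis .
  next
    case False
    then show ?thesis using assms by (simp add: End_out)
  qed
qed

lemma gen_E_monom: "m \<le> n \<Longrightarrow> gen_op n E (monom c m) = (if m < n then monom c (Suc m) else (0::'k::field poly))"
  by (auto simp: poly_eq_iff coeff_gen_E coeff_monom simp del: gen_op.simps)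

lemma gen_H_monom: "m \<le> n \<Longrightarrow> gen_op n H (monom c m) = (monom ((of_nat (2*m) - of_nat n) * c) m :: 'k::field poly)"
  by (auto simp: poly_eq_iff coeff_gen_H coeff_monom simp del: gen_op.simps)

lemma gen_F_monom: "m \<le> n \<Longrightarrow> gen_op n F (monom c m) =
   (monom (of_nat m * (of_nat n - of_nat (m - 1)) * c) (m - 1) :: 'k::field poly)"
  by (cases m) (auto simp: poly_eq_iff coeff_gen_F coeff_monom simp del: gen_op.simps)

lift_definition sc :: "'k::comm_ring_1 \<Rightarrow> 'k FA" is fa_const by (rule fin_supp_fa_const)
lift_definition wd :: "gen list \<Rightarrow> 'k::comm_ring_1 FA" is fa_word by (rule fin_supp_fa_word)

lemma wd_append: "wd (u @ v) = (wd u * wd v :: 'k::comm_ring_1 FA)"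
  by transfer (simp add: fa_mul_word)

lemma wd_Nil: "wd [] = (1 :: 'k::comm_ring_1 FA)"
  by transfer (simp add: fa_word_def fa_const_def)

lemma wd_Cons: "wd (g # w) = (wd [g] * wd w :: 'k::comm_ring_1 FA)"
  using wd_append[of "[g]" w] by simp

lemma rep_sc_mult: "repFA (sc c * x) = fa_smult c (repFA x)"
  by transfer (simp add: fa_mul_const_left)

lemma rep_mult_sc: "repFA (x * sc c) = fa_smult c (repFA x)"
  by transfer (simp add: fa_mul_const_right)

lemma sc_central: "sc c * x = x * sc c"
  by (simp add: repFA_inject[symmetric] rep_sc_mult rep_mult_sc)

lemma sc_add: "sc (a + b) = sc a + (sc b :: 'k::comm_ring_1 FA)"
  by transfer (auto simp: fa_const_def fa_add_def)

lemma sc_mult: "sc (a * b) = sc a * (sc b :: 'k::comm_ring_1 FA)"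
  by (simp add: repFA_inject[symmetric] rep_sc_mult) (transfer, auto simp: fa_const_def fa_smult_def)

lemma sc_one: "sc 1 = (1 :: 'k::comm_ring_1 FA)"
  by transfer simp

lemma sc_zero: "sc 0 = (0 :: 'k::comm_ring_1 FA)"
  by transfer (simp add: fa_const_def fa_zero_def)

lemma sc_uminus: "sc (- a) = - (sc a :: 'k::comm_ring_1 FA)"
  by transfer (auto simp: fa_const_def)

lemma sc_diff: "sc (a - b) = sc a - (sc b :: 'k::comm_ring_1 FA)"
  by transfer (auto simp: fa_const_def fa_sub_def)

lemma sc_of_nat: "sc (of_nat m) = (of_nat m :: 'k::comm_ring_1 FA)"
  by (induction m) (simp_all add: sc_zero sc_one sc_add)

lemma sc_of_int: "sc (of_int m) = (of_int m :: 'k::comm_ring_1 FA)"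
proof -
  obtain a b where "m = int a - int b" by (metis int_diff_cases)
  then show ?thesis by (simp add: sc_diff sc_of_nat)
qed

lemma sc_numeral: "sc (numeral m) = (numeral m :: 'k::comm_ring_1 FA)"
  using sc_of_nat[of "numeral m", where 'k='k] by simp

lemma sc_sum: "sc (sum f A) = (\<Sum>a\<in>A. sc (f a) :: 'k::comm_ring_1 FA)"
  by (induction A rule: infinite_finite_induct) (simp_all add: sc_zero sc_add)

lemma repFA_add: "repFA (x + y) = (\<lambda>w. repFA x w + repFA y w)"
  by transfer (simp add: fa_add_def)

lemma repFA_zero: "repFA 0 = (\<lambda>w. 0)"
  by transfer (simp add: fa_zero_def)

lemma repFA_sum: "repFA (sum f A) = (\<lambda>w. \<Sum>a\<in>A. repFA (f a) w)"
  by (induction A rule: infinite_finite_induct) (simp_all add: repFA_zero repFA_add)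

lemma rep_sc_wd: "repFA (sc c * wd u) = (\<lambda>w. if w = u then c else 0)"
  by (simp add: rep_sc_mult) (transfer, auto simp: fa_smult_def fa_word_def fun_eq_iff)

definition supp :: "'k::comm_ring_1 FA \<Rightarrow> gen list set" where
  "supp x = {w. repFA x w \<noteq> 0}"

lemma finite_supp[simp]: "finite (supp x)"
  unfolding supp_def using repFA[of x] by (simp add: fin_supp_def)

lemma FA_decomp_super:
  assumes "finite S" "supp x \<subseteq> S"
  shows "x = (\<Sum>w\<in>S. sc (repFA x w) * wd w)"
proof -
  have "repFA (\<Sum>w\<in>S. sc (repFA x w) * wd w) = repFA x"
  proof
    fix u
    have "repFA (\<Sum>w\<in>S. sc (repFA x w) * wd w) u = (\<Sum>w\<in>S. if u = w then repFA x w else 0)"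
      by (simp add: repFA_sum rep_sc_wd)
    also have "\<dots> = repFA x u"
      using assms by (auto simp: sum.delta supp_def)
    finally show "repFA (\<Sum>w\<in>S. sc (repFA x w) * wd w) u = repFA x u" .
  qed
  then show ?thesis by (simp add: repFA_inject)
qed

lemma FA_decomp: "x = (\<Sum>w\<in>supp x. sc (repFA x w) * wd w)"
  by (rule FA_decomp_super) auto

definition ev :: "nat \<Rightarrow> 'k::field FA \<Rightarrow> 'k poly \<Rightarrow> 'k poly" where
  "ev n x = fa_eval n (repFA x)"

lemma ev_super:
  assumes "finite S" "supp x \<subseteq> S"
  shows "ev n x p = (\<Sum>w\<in>S. smult (repFA x w) (word_op n w p))"
  unfolding ev_def fa_eval_def
  by (rule sum.mono_neutral_left) (use assms in \<open>auto simp: supp_def\<close>)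

lemma supp_add: "supp (x + y) \<subseteq> supp x \<union> supp y"
  by (auto simp: supp_def repFA_add)

lemma ev_add: "ev n (x + y) p = ev n x p + ev n y p"
proof -
  let ?S = "supp x \<union> supp y"
  have "ev n (x + y) p = (\<Sum>w\<in>?S. smult (repFA (x + y) w) (word_op n w p))"
    by (rule ev_super) (auto dest: subsetD[OF supp_add])
  also have "\<dots> = (\<Sum>w\<in>?S. smult (repFA x w) (word_op n w p)) + (\<Sum>w\<in>?S. smult (repFA y w) (word_op n w p))"
    by (simp add: repFA_add smult_add_left sum.distrib)
  also have "\<dots> = ev n x p + ev n y p"
    using ev_super[of ?S x n p] ev_super[of ?S y n p] by auto
  finally show ?thesis .
qed

lemma ev_zero: "ev n 0 p = 0"
  by (simp add: ev_def fa_eval_def repFA_zero)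

lemma ev_sum: "ev n (sum f A) p = (\<Sum>a\<in>A. ev n (f a) p)"
  by (induction A rule: infinite_finite_induct) (simp_all add: ev_zero ev_add)

lemma ev_sc_wd: "ev n (sc c * wd u) p = smult c (word_op n u p)"
proof -
  have "ev n (sc c * wd u) p = (\<Sum>w\<in>{u}. smult (repFA (sc c * wd u) w) (word_op n w p))"
    by (rule ev_super) (auto simp: supp_def rep_sc_wd)
  then show ?thesis by (simp add: rep_sc_wd)
qed

lemma ev_decomp: "ev n x p = (\<Sum>w\<in>supp x. smult (repFA x w) (word_op n w p))"
  by (rule ev_super) auto

lemma End_ev: "is_End n (ev n x)"
proof (rule is_EndI)
  fix p show "ev n x p \<in> On n"
    by (auto simp: ev_decomp End_On[OF End_word_op])
next
  fix p q :: "'a poly" assume "p \<in> On n" "q \<in> On n"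
  then show "ev n x (p + q) = ev n x p + ev n x q"
    by (simp add: ev_decomp End_add[OF End_word_op] smult_add_right sum.distrib)
next
  fix c and p :: "'a poly" assume "p \<in> On n"
  then show "ev n x (smult c p) = smult c (ev n x p)"
    by (simp add: ev_decomp End_smult[OF End_word_op] smult_sum_right mult.commute)
next
  fix p :: "'a poly" assume "p \<notin> On n"
  then show "ev n x p = 0"
    by (simp add: ev_decomp End_out[OF End_word_op])
qed

lemma ev_mult: "ev n (x * y) p = ev n x (ev n y p)"
proof -
  have xy: "x * y = (\<Sum>u\<in>supp x. \<Sum>v\<in>supp y. sc (repFA x u * repFA y v) * wd (u @ v))"
    apply (subst FA_decomp[of x], subst FA_decomp[of y])
    apply (simp add: sum_product wd_append sc_mult)
    apply (intro sum.cong refl)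
    apply (metis mult.assoc sc_central)
    done
  have "ev n (x * y) p = (\<Sum>u\<in>supp x. \<Sum>v\<in>supp y. smult (repFA x u * repFA y v) (word_op n u (word_op n v p)))"
    by (subst xy) (simp add: ev_sum ev_sc_wd word_op_append)
  also have "\<dots> = ev n x (ev n y p)"
    by (simp add: ev_decomp[of n x] ev_decomp[of n y] End_sum[OF End_word_op] End_smult[OF End_word_op]
          End_On[OF End_word_op] smult_sum_right)
  finally show ?thesis .
qed

lemma ev_sc: "ev n (sc c) p = smult c (Idn n p)"
  using ev_sc_wd[of n c "[]" p] by (simp add: wd_Nil)

lemma ev_one: "ev n 1 p = Idn n p"
  using ev_sc[of n 1 p] by (simp add: sc_one)

lemma ev_sc_mult: "ev n (sc c * x) p = smult c (ev n x p)"
  by (simp add: ev_mult ev_sc Idn_in End_On[OF End_ev])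

lemma ev_uminus: "ev n (- x) p = - ev n x p"
  using ev_sc_mult[of n "-1" x p] by (simp add: sc_uminus sc_one)

lemma ev_diff: "ev n (x - y) p = ev n x p - ev n y p"
  using ev_add[of n x "- y" p] by (simp add: ev_uminus)

lemma ev_wd: "ev n (wd w) p = word_op n w p"
  using ev_sc_wd[of n 1 w p] by (simp add: sc_one)

definition gE :: "'k::comm_ring_1 FA" where "gE = wd [E]"
definition gH :: "'k::comm_ring_1 FA" where "gH = wd [H]"
definition gF :: "'k::comm_ring_1 FA" where "gF = wd [F]"

definition Sgen :: "nat \<Rightarrow> 'k::comm_ring_1 fa set" where
  "Sgen n = sl2_relations \<union>
                 {fa_sub casimir (fa_const (of_nat (n * (n + 2)))),
                  fa_word (replicate (Suc n) E)}"

definition J :: "nat \<Rightarrow> 'k::comm_ring_1 FA set" where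
  "J n = {x. repFA x \<in> fa_ideal (Sgen n)}"

lemma repFA_mult: "repFA (x * y) = fa_mul (repFA x) (repFA y)"
  by transfer simp
lemma repFA_add': "repFA (x + y) = fa_add (repFA x) (repFA y)"
  by transfer simp
lemma repFA_diff: "repFA (x - y) = fa_sub (repFA x) (repFA y)"
  by transfer simp
lemma repFA_wd: "repFA (wd w) = fa_word w"
  by transfer simp
lemma repFA_sc: "repFA (sc c) = fa_const c"
  by transfer simp
lemma repFA_zero': "repFA 0 = fa_zero"
  by transfer simp

lemma J_zero[simp]: "0 \<in> J n"
  by (simp add: J_def repFA_zero' fa_ideal.zero)

lemma J_add: "x \<in> J n \<Longrightarrow> y \<in> J n \<Longrightarrow> x + y \<in> J n"
  by (simp add: J_def repFA_add' fa_ideal.add)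

lemma J_mul: "x \<in> J n \<Longrightarrow> u * x * v \<in> J n"
  unfolding J_def repFA_mult mem_Collect_eq
proof -
  assume "repFA x \<in> fa_ideal (Sgen n)"
  moreover have "fin_supp (repFA u)" "fin_supp (repFA v)" using repFA by auto
  ultimately show "fa_mul (fa_mul (repFA u) (repFA x)) (repFA v) \<in> fa_ideal (Sgen n)"
    by (rule fa_ideal.mul)
qed

lemma J_left: "x \<in> J n \<Longrightarrow> u * x \<in> J n"
  using J_mul[of x n u 1] by simp

lemma J_right: "x \<in> J n \<Longrightarrow> x * v \<in> J n"
  using J_mul[of x n 1 v] by simp

lemma J_uminus: "x \<in> J n \<Longrightarrow> - x \<in> J n"
  using J_left[of x n "-1"] by simp

lemma J_diff: "x \<in> J n \<Longrightarrow> y \<in> J n \<Longrightarrow> x - y \<in> J n"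
  using J_add[of x n "- y"] J_uminus[of y n] by simp

lemma J_sum: "(\<And>a. a \<in> A \<Longrightarrow> f a \<in> J n) \<Longrightarrow> sum f A \<in> J n"
  by (induction A rule: infinite_finite_induct) (auto intro: J_add)

lemma J_gen: "repFA x \<in> Sgen n \<Longrightarrow> x \<in> J n"
  by (simp add: J_def fa_ideal.gen)

lemma gE_pow: "gE ^ k = (wd (replicate k E) :: 'k::comm_ring_1 FA)"
  by (induction k) (simp_all add: wd_Nil gE_def flip: wd_append)

lemma J_R1: "gE * gF - gF * gE - gH \<in> J n"
  by (rule J_gen) (simp add: Sgen_def sl2_relations_def repFA_mult repFA_diff gE_def gF_def gH_def
      repFA_wd fa_bracket_def fa_gen_def)

lemma J_R2: "gH * gE - gE * gH - sc 2 * gE \<in> J n"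
  by (rule J_gen) (simp add: Sgen_def sl2_relations_def repFA_mult repFA_diff gE_def gF_def gH_def
      repFA_wd fa_bracket_def fa_gen_def repFA_sc fa_mul_const_left)

lemma J_R3: "gH * gF - gF * gH + sc 2 * gF \<in> J n"
  by (rule J_gen) (simp add: Sgen_def sl2_relations_def repFA_mult repFA_diff gE_def gF_def gH_def
      repFA_wd fa_bracket_def fa_gen_def repFA_sc fa_mul_const_left repFA_add')

lemma J_Cas: "gH * gH + sc 2 * (gE * gF + gF * gE) - sc (of_nat (n * (n + 2))) \<in> J n"
  by (rule J_gen) (simp add: Sgen_def casimir_def repFA_mult repFA_diff gE_def gF_def gH_def
      repFA_wd fa_gen_def fa_mul_const_left repFA_add' repFA_sc)

lemma J_Epow: "gE ^ Suc n \<in> J n"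
  by (rule J_gen) (simp only: gE_pow repFA_wd, simp add: Sgen_def)

definition cg :: "nat \<Rightarrow> 'k::comm_ring_1 FA \<Rightarrow> 'k FA \<Rightarrow> bool" where
  "cg n x y \<longleftrightarrow> x - y \<in> J n"

lemma cg_refl[simp]: "cg n x x" by (simp add: cg_def)
lemma cg_sym: "cg n x y \<Longrightarrow> cg n y x"
  unfolding cg_def using J_uminus by fastforce
lemma cg_trans[trans]: "cg n x y \<Longrightarrow> cg n y z \<Longrightarrow> cg n x z"
  unfolding cg_def using J_add by fastforce
lemma cg_eq_trans[trans]: "x = y \<Longrightarrow> cg n y z \<Longrightarrow> cg n x z" by simp
lemma cg_trans_eq[trans]: "cg n x y \<Longrightarrow> y = z \<Longrightarrow> cg n x z" by simp
lemma cg_add: "cg n x y \<Longrightarrow> cg n x' y' \<Longrightarrow> cg n (x + x') (y + y')"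
  unfolding cg_def using J_add by (fastforce simp: algebra_simps)
lemma cg_diff: "cg n x y \<Longrightarrow> cg n x' y' \<Longrightarrow> cg n (x - x') (y - y')"
  unfolding cg_def using J_diff by (fastforce simp: algebra_simps)
lemma cg_uminus: "cg n x y \<Longrightarrow> cg n (- x) (- y)"
  unfolding cg_def using J_uminus by (fastforce simp: algebra_simps)
lemma cg_mult_left: "cg n x y \<Longrightarrow> cg n (z * x) (z * y)"
  unfolding cg_def using J_left by (fastforce simp: algebra_simps)
lemma cg_mult_right: "cg n x y \<Longrightarrow> cg n (x * z) (y * z)"
  unfolding cg_def using J_right by (fastforce simp: algebra_simps)
lemma cg_mult: "cg n x y \<Longrightarrow> cg n x' y' \<Longrightarrow> cg n (x * x') (y * y')"
  by (meson cg_mult_left cg_mult_right cg_trans)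
lemma cg_sum: "(\<And>a. a \<in> A \<Longrightarrow> cg n (f a) (g a)) \<Longrightarrow> cg n (sum f A) (sum g A)"
  by (induction A rule: infinite_finite_induct) (auto intro: cg_add)
lemma cg_J: "cg n x 0 \<longleftrightarrow> x \<in> J n" by (simp add: cg_def)
lemma cg_J': "x \<in> J n \<Longrightarrow> cg n x y \<Longrightarrow> y \<in> J n"
  unfolding cg_def using J_diff by fastforce

lemma numeral_central: "numeral k * x = x * (numeral k :: 'k::comm_ring_1 FA)"
  by (metis sc_central sc_numeral)

lemma of_nat_central: "of_nat k * x = x * (of_nat k :: 'k::comm_ring_1 FA)"
  by (metis sc_central sc_of_nat)

lemma cg_R1: "cg n (gE * gF) (gF * gE + gH)"
  using J_R1[of n] by (simp add: cg_def algebra_simps)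
lemma cg_R2: "cg n (gH * gE) (gE * (gH + 2))"
  using J_R2[of n] by (simp add: cg_def algebra_simps sc_numeral numeral_central)
lemma cg_R3: "cg n (gH * gF) (gF * (gH - 2))"
  using J_R3[of n] by (simp add: cg_def algebra_simps sc_numeral numeral_central)

definition hp :: "'k::comm_ring_1 poly \<Rightarrow> 'k FA" where
  "hp p = (\<Sum>i<Suc (degree p). sc (coeff p i) * gH ^ i)"

lemma hp_bound: "degree p < N \<Longrightarrow> hp p = (\<Sum>i<N. sc (coeff p i) * gH ^ i)"
  unfolding hp_def
  by (rule sum.mono_neutral_left) (auto simp: coeff_eq_0 sc_zero)

lemma sc_gH_comm: "sc c * (gH * y) = gH * (sc c * y)"
  by (metis mult.assoc sc_central)

lemma hp_pCons: "hp (pCons a p) = sc a + gH * hp p"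
proof -
  let ?N = "Suc (degree p)"
  have d: "degree (pCons a p) < Suc ?N"
    using degree_pCons_le[of a p] by simp
  have "hp (pCons a p) = (\<Sum>i<Suc ?N. sc (coeff (pCons a p) i) * gH ^ i)"
    by (rule hp_bound[OF d])
  also have "\<dots> = sc a + (\<Sum>i<?N. sc (coeff p i) * gH ^ Suc i)"
    by (simp only: sum.lessThan_Suc_shift) simp
  also have "\<dots> = sc a + gH * (\<Sum>i<?N. sc (coeff p i) * gH ^ i)"
    by (simp only: sum_distrib_left power_Suc sc_gH_comm)
  also have "\<dots> = sc a + gH * hp p"
    by (simp only: hp_def)
  finally show ?thesis .
qed

lemma hp_0[simp]: "hp 0 = 0"
  by (simp add: hp_def sc_zero)

lemma hp_const: "hp [:c:] = sc c"
  by (simp add: hp_pCons)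

lemma hp_one: "hp 1 = 1"
  by (simp add: one_pCons hp_pCons sc_one)

lemma hp_X: "hp [:0, 1:] = gH"
  by (simp add: hp_pCons sc_zero sc_one)

lemma hp_add: "hp (p + q) = hp p + hp q"
proof -
  let ?N = "Suc (max (degree p) (degree q))"
  have "hp (p + q) = (\<Sum>i<?N. sc (coeff (p + q) i) * gH ^ i)"
    by (rule hp_bound) (simp add: degree_add_le less_Suc_eq_le)
  also have "\<dots> = (\<Sum>i<?N. sc (coeff p i) * gH ^ i) + (\<Sum>i<?N. sc (coeff q i) * gH ^ i)"
    by (simp add: sc_add distrib_right sum.distrib)
  also have "\<dots> = hp p + hp q"
    by (simp add: hp_bound[of p ?N] hp_bound[of q ?N])
  finally show ?thesis .
qed

lemma hp_smult: "hp (smult c p) = sc c * hp p"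
proof -
  let ?N = "Suc (degree p)"
  have "hp (smult c p) = (\<Sum>i<?N. sc (coeff (smult c p) i) * gH ^ i)"
    by (rule hp_bound) (use degree_smult_le[of c p] in auto)
  also have "\<dots> = sc c * hp p"
    unfolding hp_def by (simp only: coeff_smult sc_mult sum_distrib_left mult.assoc)
  finally show ?thesis .
qed

lemma hp_uminus: "hp (- p) = - hp p"
  using hp_smult[of "-1" p] by (simp add: sc_uminus sc_one)

lemma hp_diff: "hp (p - q) = hp p - hp q"
  using hp_add[of p "- q"] by (simp add: hp_uminus)

lemma hp_mult: "hp (p * q) = hp p * hp q"
proof (induction p rule: pCons_induct)
  case 0
  then show ?case by simp
next
  case (pCons a p)
  have "hp (pCons a p * q) = hp (smult a q + pCons 0 (p * q))" by simp
  also have "\<dots> = sc a * hp q + gH * (hp p * hp q)"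
    by (simp add: hp_add hp_smult hp_pCons sc_zero pCons.IH)
  also have "\<dots> = hp (pCons a p) * hp q"
    by (simp add: hp_pCons algebra_simps)
  finally show ?case .
qed

lemma hp_comm: "hp p * hp q = hp q * hp p"
  by (metis hp_mult mult.commute)

lemma hp_sum: "hp (sum f A) = (\<Sum>a\<in>A. hp (f a))"
  by (induction A rule: infinite_finite_induct) (simp_all add: hp_add)

lemma hp_of_nat: "hp (of_nat m) = of_nat m"
  by (metis hp_const of_nat_poly sc_of_nat)

lemma cg_hp_E: "cg n (hp p * gE) (gE * hp (pcompose p [:2, 1:]))"
proof (induction p rule: pCons_induct)
  case 0
  then show ?case by simp
next
  case (pCons a p)
  let ?p = "pcompose p [:2, 1:]"
  have "hp (pCons a p) * gE = sc a * gE + gH * (hp p * gE)"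
    by (simp add: hp_pCons algebra_simps)
  also have "cg n \<dots> (sc a * gE + gH * (gE * hp ?p))"
    by (intro cg_add cg_refl cg_mult_left pCons.IH)
  also have "sc a * gE + gH * (gE * hp ?p) = sc a * gE + (gH * gE) * hp ?p"
    by (simp add: mult.assoc)
  also have "cg n \<dots> (sc a * gE + (gE * (gH + 2)) * hp ?p)"
    by (intro cg_add cg_refl cg_mult_right cg_R2)
  also have "sc a * gE + (gE * (gH + 2)) * hp ?p = gE * hp (pcompose (pCons a p) [:2, 1:])"
    by (simp add: pcompose_pCons hp_add hp_mult hp_const hp_pCons sc_numeral sc_one sc_central sc_zero hp_smult
          algebra_simps)
  finally show ?case .
qed

lemma cg_hp_F: "cg n (hp p * gF) (gF * hp (pcompose p [:-2, 1:]))"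
proof (induction p rule: pCons_induct)
  case 0
  then show ?case by simp
next
  case (pCons a p)
  let ?p = "pcompose p [:-2, 1:]"
  have "hp (pCons a p) * gF = sc a * gF + gH * (hp p * gF)"
    by (simp add: hp_pCons algebra_simps)
  also have "cg n \<dots> (sc a * gF + gH * (gF * hp ?p))"
    by (intro cg_add cg_refl cg_mult_left pCons.IH)
  also have "sc a * gF + gH * (gF * hp ?p) = sc a * gF + (gH * gF) * hp ?p"
    by (simp add: mult.assoc)
  also have "cg n \<dots> (sc a * gF + (gF * (gH - 2)) * hp ?p)"
    by (intro cg_add cg_refl cg_mult_right cg_R3)
  also have "sc a * gF + (gF * (gH - 2)) * hp ?p = gF * hp (pcompose (pCons a p) [:-2, 1:])"
  proof -
    have "pcompose (pCons a p) [:-2, 1:] = [:a:] + ([:0, 1:] - [:2:]) * ?p"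
      by (simp add: pcompose_pCons)
    then have "gF * hp (pcompose (pCons a p) [:-2, 1:]) = gF * (sc a + (gH - sc 2) * hp ?p)"
      by (simp only: hp_add hp_mult hp_const hp_diff hp_X)
    then show ?thesis
      using sc_central[of a gF] by (simp add: sc_numeral algebra_simps)
  qed
  finally show ?case .
qed

lemma pow_mult_comm: "x ^ c * (x * y) = x * (x ^ c * (y::'k::ring_1))"
  by (metis mult.assoc power_commutes)

lemma pcompose_shift: "pcompose [:a, 1:] [:b, 1:] = [:a + b, (1::'k::comm_ring_1):]"
  by (simp add: pcompose_pCons algebra_simps)

lemma cg_hp_Epow: "cg n (hp p * gE ^ c) (gE ^ c * hp (pcompose p [:of_nat (2 * c), 1:]))"
proof (induction c arbitrary: p)
  case 0
  then show ?case by (simp add: pcompose_idR)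
next
  case (Suc c)
  let ?q = "pcompose p [:of_nat (2 * c), 1:]"
  have "hp p * gE ^ Suc c = (hp p * gE ^ c) * gE"
    by (simp only: power_Suc2 mult.assoc)
  also have "cg n \<dots> ((gE ^ c * hp ?q) * gE)"
    by (intro cg_mult_right Suc.IH)
  also have "(gE ^ c * hp ?q) * gE = gE ^ c * (hp ?q * gE)"
    by (simp add: mult.assoc)
  also have "cg n \<dots> (gE ^ c * (gE * hp (pcompose ?q [:2, 1:])))"
    by (intro cg_mult_left cg_hp_E)
  also have "gE ^ c * (gE * hp (pcompose ?q [:2, 1:])) = gE ^ Suc c * hp (pcompose p [:of_nat (2 * Suc c), 1:])"
    by (simp add: pow_mult_comm pcompose_assoc[symmetric] pcompose_shift algebra_simps)
  finally show ?case .
qed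

lemma cg_hp_Fpow: "cg n (hp p * gF ^ a) (gF ^ a * hp (pcompose p [:- of_nat (2 * a), 1:]))"
proof (induction a arbitrary: p)
  case 0
  then show ?case by (simp add: pcompose_idR)
next
  case (Suc a)
  let ?q = "pcompose p [:- of_nat (2 * a), 1:]"
  have "hp p * gF ^ Suc a = (hp p * gF ^ a) * gF"
    by (simp only: power_Suc2 mult.assoc)
  also have "cg n \<dots> ((gF ^ a * hp ?q) * gF)"
    by (intro cg_mult_right Suc.IH)
  also have "(gF ^ a * hp ?q) * gF = gF ^ a * (hp ?q * gF)"
    by (simp add: mult.assoc)
  also have "cg n \<dots> (gF ^ a * (gF * hp (pcompose ?q [:-2, 1:])))"
    by (intro cg_mult_left cg_hp_F)
  also have "gF ^ a * (gF * hp (pcompose ?q [:-2, 1:])) = gF ^ Suc a * hp (pcompose p [:- of_nat (2 * Suc a), 1:])"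
    by (simp add: pow_mult_comm pcompose_assoc[symmetric] pcompose_shift algebra_simps)
  finally show ?case .
qed

lemma cg_E_Fpow: "cg n (gE * gF ^ Suc a)
   (gF ^ Suc a * gE + gF ^ a * hp [:- of_nat (Suc a * a), of_nat (Suc a):])"
proof (induction a)
  case 0
  show ?case using cg_R1[of n] by (simp add: hp_X)
next
  case (Suc a)
  let ?q = "[:- of_nat (Suc a * a), of_nat (Suc a):] :: 'a poly"
  have "gE * gF ^ Suc (Suc a) = (gE * gF ^ Suc a) * gF"
    by (simp only: power_Suc2[of gF "Suc a"] mult.assoc)
  also have "cg n \<dots> ((gF ^ Suc a * gE + gF ^ a * hp ?q) * gF)"
    by (intro cg_mult_right Suc.IH)
  also have "(gF ^ Suc a * gE + gF ^ a * hp ?q) * gF = gF ^ Suc a * (gE * gF) + gF ^ a * (hp ?q * gF)"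
    by (simp add: algebra_simps)
  also have "cg n \<dots> (gF ^ Suc a * (gF * gE + gH) + gF ^ a * (gF * hp (pcompose ?q [:-2, 1:])))"
    by (intro cg_add cg_mult_left cg_R1 cg_hp_F)
  also have "gF ^ Suc a * (gF * gE + gH) + gF ^ a * (gF * hp (pcompose ?q [:-2, 1:])) =
     gF ^ Suc (Suc a) * gE + gF ^ Suc a * (hp ([:0, 1:] + pcompose ?q [:-2, 1:]))"
    by (simp add: hp_add hp_X algebra_simps pow_mult_comm)
  also have "[:0, 1:] + pcompose ?q [:-2, 1:] = [:- of_nat (Suc (Suc a) * Suc a), of_nat (Suc (Suc a)):]"
    by (simp add: pcompose_pCons algebra_simps)
  finally show ?case .
qed

lemma cg_Epow_F: "cg n (gE ^ Suc k * gF)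
   (gF * gE ^ Suc k + gE ^ k * hp [:of_nat (Suc k * k), of_nat (Suc k):])"
proof (induction k)
  case 0
  show ?case using cg_R1[of n] by (simp add: hp_X)
next
  case (Suc k)
  let ?t = "[:of_nat (Suc k * k), of_nat (Suc k):] :: 'a poly"
  have "gE ^ Suc (Suc k) * gF = gE * (gE ^ Suc k * gF)"
    by (simp add: mult.assoc)
  also have "cg n \<dots> (gE * (gF * gE ^ Suc k + gE ^ k * hp ?t))"
    by (intro cg_mult_left Suc.IH)
  also have "gE * (gF * gE ^ Suc k + gE ^ k * hp ?t) = (gE * gF) * gE ^ Suc k + gE ^ Suc k * hp ?t"
    by (simp add: algebra_simps)
  also have "cg n \<dots> ((gF * gE + gH) * gE ^ Suc k + gE ^ Suc k * hp ?t)"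
    by (intro cg_add cg_mult_right cg_R1 cg_refl)
  also have "(gF * gE + gH) * gE ^ Suc k + gE ^ Suc k * hp ?t =
      gF * gE ^ Suc (Suc k) + hp [:0, 1:] * gE ^ Suc k + gE ^ Suc k * hp ?t"
    by (simp add: hp_X algebra_simps)
  also have "cg n \<dots> (gF * gE ^ Suc (Suc k) + gE ^ Suc k * hp (pcompose [:0, 1:] [:of_nat (2 * Suc k), 1:]) + gE ^ Suc k * hp ?t)"
    by (intro cg_add cg_refl cg_hp_Epow)
  also have "gF * gE ^ Suc (Suc k) + gE ^ Suc k * hp (pcompose [:0, 1:] [:of_nat (2 * Suc k), 1:]) + gE ^ Suc k * hp ?t
     = gF * gE ^ Suc (Suc k) + gE ^ Suc k * hp (pcompose [:0, 1:] [:of_nat (2 * Suc k), 1:] + ?t)"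
    by (simp add: hp_add algebra_simps)
  also have "pcompose [:0, 1:] [:of_nat (2 * Suc k), 1:] + ?t = [:of_nat (Suc (Suc k) * Suc k), of_nat (Suc (Suc k)):]"
    by (simp add: pcompose_pCons algebra_simps)
  finally show ?case .
qed

definition phi :: "nat \<Rightarrow> 'k::field poly" where
  "phi n = smult (1/4) [:of_nat (n * (n + 2)), -2, -1:]"

lemma cg_FE: "cg n (gF * gE) (hp (phi n :: 'k::field_char_0 poly))"
proof -
  let ?c = "of_nat (n * (n + 2)) :: 'k"
  have "cg n (gH * gH + sc 2 * (gE * gF + gF * gE)) (sc ?c)"
    using J_Cas[of n] by (simp add: cg_def)
  moreover have "cg n (gH * gH + sc 2 * (gE * gF + gF * gE)) (gH * gH + sc 2 * ((gF * gE + gH) + gF * gE))"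
    by (intro cg_add cg_refl cg_mult_left cg_R1)
  ultimately have "cg n (gH * gH + sc 2 * ((gF * gE + gH) + gF * gE)) (sc ?c)"
    by (meson cg_sym cg_trans)
  then have "cg n (sc (1/4) * (gH * gH + sc 2 * ((gF * gE + gH) + gF * gE)) - sc (1/4) * (gH * gH + sc 2 * gH))
      (sc (1/4) * sc ?c - sc (1/4) * (gH * gH + sc 2 * gH))"
    by (intro cg_diff cg_mult_left cg_refl)
  moreover have "sc (1/4) * (gH * gH + sc 2 * ((gF * gE + gH) + gF * gE)) - sc (1/4) * (gH * gH + sc 2 * gH)
      = (gF * gE :: 'k FA)"
  proof -
    have "sc (1/4) * (gH * gH + sc 2 * ((gF * gE + gH) + gF * gE)) - sc (1/4) * (gH * gH + sc 2 * gH)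
       = sc (1/4) * (sc 2 * (gF * gE)) + sc (1/4) * (sc 2 * (gF * gE))"
      by (simp add: algebra_simps)
    also have "\<dots> = sc (1/4 * 2 + 1/4 * 2) * (gF * gE)"
      by (simp only: sc_add sc_mult distrib_right mult.assoc)
    also have "sc (1/4 * 2 + 1/4 * 2) = (1 :: 'k FA)"
      by (simp add: sc_one)
    finally show ?thesis by simp
  qed
  moreover have "sc (1/4) * sc ?c - sc (1/4) * (gH * gH + sc 2 * gH) = hp (phi n)"
  proof -
    have "sc (1/4) * sc ?c - sc (1/4) * (gH * gH + sc 2 * gH) =
       hp ([:1/4:] * [:?c:] - [:1/4:] * ([:0, 1:] * [:0, 1:] + [:2:] * [:0, 1:]))"
      by (simp only: hp_mult hp_add hp_diff hp_const hp_X)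
    also have "[:1/4:] * [:?c:] - [:1/4:] * ([:0, 1:] * [:0, 1:] + [:2:] * [:0, 1:]) = phi n"
      by (simp add: phi_def)
    finally show ?thesis .
  qed
  ultimately show ?thesis by simp
qed

definition wt :: "nat \<Rightarrow> nat \<Rightarrow> 'k::comm_ring_1" where
  "wt n m = of_nat (2 * m) - of_nat n"

definition rr :: "nat \<Rightarrow> nat \<Rightarrow> 'k::comm_ring_1 poly" where
  "rr n k = (\<Prod>m<Suc n - k. [:- wt n m, 1:])"

definition ss :: "nat \<Rightarrow> nat \<Rightarrow> 'k::comm_ring_1 poly" where
  "ss n a = (\<Prod>j<Suc n - a. [:- wt n (a + j), 1:])"

lemma quad1:
  assumes "k \<le> n"
  shows "pcompose [:of_nat (n * (n + 2)), -2, -1:] [:of_nat (2 * k), 1:] =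
     - ([:of_nat n + of_nat (2 * k) + 2, 1:] * [:- wt n (n - k), 1:] :: 'k::comm_ring_1 poly)"
proof -
  have w: "wt n (n - k) = (of_nat n - 2 * of_nat k :: 'k)"
    using assms by (simp add: wt_def of_nat_diff algebra_simps)
  show ?thesis
    by (simp add: w pcompose_pCons algebra_simps)
qed

lemma quad2:
  shows "pcompose [:of_nat (n * (n + 2)), -2, -1:] [:of_nat (2 * k), 1:] +
      smult 4 [:of_nat (Suc k * k), of_nat (Suc k):] =
     - ([:- (of_nat n + 2), 1:] * [:- wt n 0, 1:] :: 'k::comm_ring_1 poly)"
  by (simp add: wt_def pcompose_pCons algebra_simps)


lemma wt_Suc: "wt n (Suc m) = wt n m + 2"
  by (simp add: wt_def algebra_simps)

lemma rr_last: "k \<le> n \<Longrightarrow> rr n k = rr n (Suc k) * [:- wt n (n - k), 1:]"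
proof -
  assume "k \<le> n"
  then have "Suc n - k = Suc (n - k)" "Suc n - Suc k = n - k" by auto
  then show ?thesis by (simp add: rr_def)
qed

lemma pcompose_lin: "pcompose [:a, 1:] [:b, 1:] = [:a + b, 1::'k::comm_ring_1:]"
  by (simp add: pcompose_pCons)

lemma rr_first: "k \<le> n \<Longrightarrow> (rr n k :: 'k::comm_ring_1 poly) = [:- wt n 0, 1:] * pcompose (rr n (Suc k)) [:-2, 1:]"
proof -
  assume "k \<le> n"
  then have e: "Suc n - k = Suc (n - k)" "Suc n - Suc k = n - k" by auto
  have "pcompose (rr n (Suc k) :: 'k poly) [:-2, 1:] = (\<Prod>m<n - k. [:- wt n (Suc m), 1:])"
    unfolding rr_def e pcompose_prod
    by (intro prod.cong refl) (simp add: pcompose_lin wt_Suc algebra_simps)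
  then show ?thesis
    unfolding rr_def e by (simp only: prod.lessThan_Suc_shift)
qed

lemma rr_top: "rr n (Suc n) = 1"
  by (simp add: rr_def)

lemma ss_first: "a \<le> n \<Longrightarrow> ss n a = [:- wt n a, 1:] * ss n (Suc a)"
proof -
  assume "a \<le> n"
  then have e: "Suc n - a = Suc (n - a)" "Suc n - Suc a = n - a" by auto
  show ?thesis unfolding ss_def e by (simp only: prod.lessThan_Suc_shift) simp
qed

lemma ss_shift: "a \<le> n \<Longrightarrow> pcompose (ss n a :: 'k::comm_ring_1 poly) [:-2, 1:] = ss n (Suc a) * [:- wt n (Suc n), 1:]"
proof -
  assume a: "a \<le> n"
  then have e: "Suc n - a = Suc (n - a)" "Suc n - Suc a = n - a" by auto
  have "pcompose (ss n a :: 'k poly) [:-2, 1:] = (\<Prod>j<Suc (n - a). [:- wt n (Suc a + j), 1:])"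
    unfolding ss_def e pcompose_prod
    by (intro prod.cong refl) (simp add: pcompose_lin wt_Suc algebra_simps)
  also have "\<dots> = ss n (Suc a) * [:- wt n (Suc n), 1:]"
    using a unfolding ss_def e by (simp only: prod.lessThan_Suc) simp
  finally show ?thesis .
qed

lemma ss_zero: "ss n 0 = rr n 0"
  by (simp add: ss_def rr_def)

lemma ss_top: "ss n (Suc n) = 1"
  by (simp add: ss_def)

lemma J_sc_cancel:
  assumes "sc d * x \<in> J n" "d \<noteq> (0::'k::field)"
  shows "x \<in> J n"
proof -
  have "sc (1/d) * (sc d * x) \<in> J n" using J_left[OF assms(1)] .
  also have "sc (1/d) * (sc d * x) = x"
    using assms(2) by (simp add: mult.assoc[symmetric] sc_one flip: sc_mult)
  finally show ?thesis .
qed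

lemma E_step:
  assumes k: "k \<le> n" and X: "gE ^ Suc k * hp (rr n (Suc k) :: 'k::field_char_0 poly) \<in> J n"
  shows "gE ^ k * hp (rr n k :: 'k poly) \<in> J n"
proof -
  define R1 :: "'k poly" where "R1 = rr n (Suc k)"
  define R' where "R' = pcompose R1 [:-2, 1:]"
  define \<phi>k where "\<phi>k = pcompose (phi n :: 'k poly) [:of_nat (2 * k), 1:]"
  define tk :: "'k poly" where "tk = [:of_nat (Suc k * k), of_nat (Suc k):]"
  have A: "gE ^ k * hp (\<phi>k * R1) \<in> J n"
  proof (rule cg_J')
    show "gF * (gE ^ Suc k * hp R1) \<in> J n" unfolding R1_def by (rule J_left[OF X])
    have "gF * (gE ^ Suc k * hp R1) = (gF * gE) * (gE ^ k * hp R1)"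
      by (simp add: mult.assoc)
    also have "cg n \<dots> (hp (phi n) * (gE ^ k * hp R1))"
      by (intro cg_mult_right cg_FE)
    also have "hp (phi n) * (gE ^ k * hp R1) = (hp (phi n) * gE ^ k) * hp R1"
      by (simp add: mult.assoc)
    also have "cg n \<dots> ((gE ^ k * hp \<phi>k) * hp R1)"
      unfolding \<phi>k_def by (intro cg_mult_right cg_hp_Epow)
    also have "(gE ^ k * hp \<phi>k) * hp R1 = gE ^ k * hp (\<phi>k * R1)"
      by (simp add: hp_mult mult.assoc)
    finally show "cg n (gF * (gE ^ Suc k * hp R1)) (gE ^ k * hp (\<phi>k * R1))" .
  qed
  have B: "gE ^ k * hp ((\<phi>k + tk) * R') \<in> J n"
  proof (rule cg_J')
    show "(gE ^ Suc k * hp R1) * gF \<in> J n" unfolding R1_def by (rule J_right[OF X])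
    have "(gE ^ Suc k * hp R1) * gF = gE ^ Suc k * (hp R1 * gF)"
      by (simp add: mult.assoc)
    also have "cg n \<dots> (gE ^ Suc k * (gF * hp R'))"
      unfolding R'_def by (intro cg_mult_left cg_hp_F)
    also have "gE ^ Suc k * (gF * hp R') = (gE ^ Suc k * gF) * hp R'"
      by (simp add: mult.assoc)
    also have "cg n \<dots> ((gF * gE ^ Suc k + gE ^ k * hp tk) * hp R')"
      unfolding tk_def by (intro cg_mult_right cg_Epow_F)
    also have "(gF * gE ^ Suc k + gE ^ k * hp tk) * hp R' = (gF * gE) * (gE ^ k * hp R') + gE ^ k * hp (tk * R')"
      by (simp add: algebra_simps hp_mult hp_comm[of R' tk])
    also have "cg n \<dots> (hp (phi n) * (gE ^ k * hp R') + gE ^ k * hp (tk * R'))"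
      by (intro cg_add cg_refl cg_mult_right cg_FE)
    also have "hp (phi n) * (gE ^ k * hp R') + gE ^ k * hp (tk * R') =
        (hp (phi n) * gE ^ k) * hp R' + gE ^ k * hp (tk * R')"
      by (simp add: mult.assoc)
    also have "cg n \<dots> ((gE ^ k * hp \<phi>k) * hp R' + gE ^ k * hp (tk * R'))"
      unfolding \<phi>k_def by (intro cg_add cg_refl cg_mult_right cg_hp_Epow)
    also have "(gE ^ k * hp \<phi>k) * hp R' + gE ^ k * hp (tk * R') = gE ^ k * hp ((\<phi>k + tk) * R')"
      by (simp add: hp_mult hp_add algebra_simps hp_comm[of R' tk] hp_comm[of R' \<phi>k])
    finally show "cg n ((gE ^ Suc k * hp R1) * gF) (gE ^ k * hp ((\<phi>k + tk) * R'))" .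
  qed
  define d :: 'k where "d = - (of_nat (2 * n + 2 * k + 4) / 4)"
  have poly: "\<phi>k * R1 - (\<phi>k + tk) * R' = smult d (rr n k)"
  proof -
    define Q1 :: "'k poly" where "Q1 = [:of_nat n + of_nat (2 * k) + 2, 1:]"
    define Q2 :: "'k poly" where "Q2 = [:- (of_nat n + 2), 1:]"
    define L1 :: "'k poly" where "L1 = [:- wt n (n - k), 1:]"
    define L0 :: "'k poly" where "L0 = [:- wt n 0, 1:]"
    have p1: "\<phi>k = smult (1/4) (- (Q1 * L1))"
      unfolding \<phi>k_def phi_def pcompose_smult Q1_def L1_def using quad1[OF k, where 'k='k] by simp
    have p2: "\<phi>k + tk = smult (1/4) (- (Q2 * L0))"
    proof -
      have "\<phi>k + tk = smult (1/4) (pcompose [:of_nat (n * (n + 2)), -2, -1:] [:of_nat (2 * k), 1:] +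
          smult 4 [:of_nat (Suc k * k), of_nat (Suc k):])"
        unfolding \<phi>k_def phi_def pcompose_smult tk_def by (simp add: smult_add_right)
      then show ?thesis using quad2[of n k, where 'k='k] unfolding Q2_def L0_def by simp
    qed
    have r1: "rr n k = R1 * L1" unfolding R1_def L1_def by (rule rr_last[OF k])
    have r2: "rr n k = L0 * R'" unfolding R'_def R1_def L0_def by (rule rr_first[OF k])
    have q: "Q1 - Q2 = [:of_nat (2 * n + 2 * k + 4):]"
      unfolding Q1_def Q2_def by (simp add: algebra_simps)
    have "\<phi>k * R1 - (\<phi>k + tk) * R' = smult (1/4) (- (Q1 * (R1 * L1)) + Q2 * (L0 * R'))"
      unfolding p2 unfolding p1 by (simp add: algebra_simps smult_add_right smult_diff_right)
    also have "\<dots> = smult (1/4) (- ((Q1 - Q2) * rr n k))"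
      unfolding r1[symmetric] r2[symmetric] by (simp add: algebra_simps)
    also have "\<dots> = smult d (rr n k)"
      unfolding q d_def by simp
    finally show ?thesis .
  qed
  have "gE ^ k * hp (\<phi>k * R1) - gE ^ k * hp ((\<phi>k + tk) * R') \<in> J n"
    using A B by (rule J_diff)
  also have "gE ^ k * hp (\<phi>k * R1) - gE ^ k * hp ((\<phi>k + tk) * R') = sc d * (gE ^ k * hp (rr n k))"
    by (simp add: right_diff_distrib[symmetric] hp_diff[symmetric] poly hp_smult)
       (metis mult.assoc sc_central)
  finally have "sc d * (gE ^ k * hp (rr n k)) \<in> J n" .
  moreover have "d \<noteq> 0" unfolding d_def by (simp del: of_nat_add add: of_nat_add[symmetric])
  ultimately show ?thesis by (rule J_sc_cancel)
qed

lemma E_chain: "k \<le> Suc n \<Longrightarrow> gE ^ k * hp (rr n k :: 'k::field_char_0 poly) \<in> J n"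
proof (induction "Suc n - k" arbitrary: k)
  case 0
  then have "k = Suc n" by simp
  moreover have "gE ^ Suc n \<in> (J n :: 'k FA set)" by (rule J_Epow)
  ultimately show ?case by (simp add: rr_top hp_one)
next
  case (Suc d)
  then have k: "k \<le> n" and d: "d = Suc n - Suc k" by auto
  have "gE ^ Suc k * hp (rr n (Suc k) :: 'k poly) \<in> J n"
    using Suc.hyps(1)[OF d] k by simp
  then show ?case by (rule E_step[OF k])
qed

lemma F_step:
  assumes a: "a \<le> n" and Y: "gF ^ a * hp (ss n a :: 'k::field_char_0 poly) \<in> J n"
  shows "gF ^ Suc a * hp (ss n (Suc a) :: 'k poly) \<in> J n"
proof -
  define S1 :: "'k poly" where "S1 = ss n (Suc a)"
  define La :: "'k poly" where "La = [:- wt n a, 1:]"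
  define Lt :: "'k poly" where "Lt = [:- wt n (Suc n), 1:]"
  have A: "gF ^ Suc a * hp (S1 * La) \<in> J n"
  proof -
    have "gF * (gF ^ a * hp (ss n a :: 'k poly)) \<in> J n" by (rule J_left[OF Y])
    also have "gF * (gF ^ a * hp (ss n a)) = gF ^ Suc a * hp (S1 * La)"
      unfolding S1_def La_def ss_first[OF a] by (simp add: mult.assoc mult.commute)
    finally show ?thesis .
  qed
  have B: "gF ^ Suc a * hp (S1 * Lt) \<in> J n"
  proof (rule cg_J')
    show "(gF ^ a * hp (ss n a :: 'k poly)) * gF \<in> J n" by (rule J_right[OF Y])
    have "(gF ^ a * hp (ss n a)) * gF = gF ^ a * (hp (ss n a) * gF)"
      by (simp add: mult.assoc)
    also have "cg n \<dots> (gF ^ a * (gF * hp (pcompose (ss n a) [:-2, 1:])))"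
      by (intro cg_mult_left cg_hp_F)
    also have "gF ^ a * (gF * hp (pcompose (ss n a) [:-2, 1:])) = gF ^ Suc a * hp (S1 * Lt)"
      unfolding S1_def Lt_def ss_shift[OF a] by (simp only: power_Suc2 mult.assoc)
    finally show "cg n ((gF ^ a * hp (ss n a)) * gF) (gF ^ Suc a * hp (S1 * Lt))" .
  qed
  define d :: 'k where "d = wt n (Suc n) - wt n a"
  have "gF ^ Suc a * hp (S1 * La) - gF ^ Suc a * hp (S1 * Lt) \<in> J n"
    using A B by (rule J_diff)
  also have "gF ^ Suc a * hp (S1 * La) - gF ^ Suc a * hp (S1 * Lt) = sc d * (gF ^ Suc a * hp S1)"
  proof -
    have "S1 * La - S1 * Lt = smult d S1"
      unfolding La_def Lt_def d_def by (simp add: algebra_simps smult_diff_left)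
    then show ?thesis
      by (simp add: right_diff_distrib[symmetric] hp_diff[symmetric] hp_smult)
         (metis mult.assoc sc_central)
  qed
  finally have "sc d * (gF ^ Suc a * hp S1) \<in> J n" .
  moreover have "d \<noteq> 0"
  proof -
    have e: "d = 2 * of_nat (Suc n - a)" using a by (simp add: d_def wt_def of_nat_diff algebra_simps)
    have "Suc n - a \<noteq> 0" using a by simp
    then have "(of_nat (Suc n - a) :: 'k) \<noteq> 0" by (metis of_nat_eq_0_iff)
    moreover have "(2::'k) \<noteq> 0" by simp
    ultimately show ?thesis unfolding e by (metis mult_eq_0_iff)
  qed
  ultimately show ?thesis unfolding S1_def by (rule J_sc_cancel)
qed

lemma F_chain: "a \<le> Suc n \<Longrightarrow> gF ^ a * hp (ss n a :: 'k::field_char_0 poly) \<in> J n"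
proof (induction a)
  case 0
  then show ?case using E_chain[of 0 n, where 'k='k] by (simp add: ss_zero)
next
  case (Suc a)
  then show ?case using F_step[of a n] by simp
qed

lemma J_Fpow: "gF ^ Suc n \<in> (J n :: 'k::field_char_0 FA set)"
  using F_chain[of "Suc n" n, where 'k='k] by (simp add: ss_top hp_one)

definition NFt :: "nat \<Rightarrow> (nat \<Rightarrow> 'k::comm_ring_1 poly) \<Rightarrow> (nat \<Rightarrow> 'k poly) \<Rightarrow> 'k FA" where
  "NFt n P Q = (\<Sum>c\<le>n. gE ^ c * hp (P c)) + (\<Sum>a\<le>n. gF ^ a * hp (Q a))"

definition nfr :: "nat \<Rightarrow> 'k::comm_ring_1 FA \<Rightarrow> bool" where
  "nfr n x \<longleftrightarrow> (\<exists>P Q. cg n x (NFt n P Q))"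

lemma NFt_add: "NFt n P Q + NFt n P' Q' = NFt n (\<lambda>i. P i + P' i) (\<lambda>i. Q i + Q' i)"
  by (simp add: NFt_def hp_add distrib_left sum.distrib algebra_simps)

lemma NFt_zero: "NFt n (\<lambda>_. 0) (\<lambda>_. 0) = 0"
  by (simp add: NFt_def)

lemma nf_zero: "nfr n 0"
  unfolding nfr_def by (rule exI[of _ "\<lambda>_. 0"], rule exI[of _ "\<lambda>_. 0"]) (simp add: NFt_zero)

lemma nf_add: "nfr n x \<Longrightarrow> nfr n y \<Longrightarrow> nfr n (x + y)"
  unfolding nfr_def by (metis NFt_add cg_add)

lemma nf_cg: "nfr n x \<Longrightarrow> cg n y x \<Longrightarrow> nfr n y"
  unfolding nfr_def by (meson cg_trans)

lemma nf_sum: "(\<And>a. a \<in> A \<Longrightarrow> nfr n (f a)) \<Longrightarrow> nfr n (sum f A)"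
  by (induction A rule: infinite_finite_induct) (auto intro: nf_add nf_zero)

lemma nf_J: "x \<in> J n \<Longrightarrow> nfr n x"
  by (rule nf_cg[OF nf_zero]) (simp add: cg_J)

lemma nf_termE: "c \<le> Suc n \<Longrightarrow> nfr n (gE ^ c * hp (p :: 'k::field_char_0 poly))"
proof (cases "c = Suc n")
  case True
  have "gE ^ Suc n * hp p \<in> J n" by (rule J_right[OF J_Epow])
  then show ?thesis using True by (simp add: nf_J)
next
  case False
  assume "c \<le> Suc n"
  with False have c: "c \<le> n" by simp
  have "NFt n (\<lambda>i. if i = c then p else 0) (\<lambda>_. 0) = gE ^ c * hp p"
    using c by (simp add: NFt_def if_distrib[of hp] if_distrib[of "\<lambda>y. _ * y"] sum.delta cong: if_cong)
  then show ?thesis unfolding nfr_def by (metis cg_refl)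
qed

lemma nf_termF: "a \<le> Suc n \<Longrightarrow> nfr n (gF ^ a * hp (q :: 'k::field_char_0 poly))"
proof (cases "a = Suc n")
  case True
  have "gF ^ Suc n * hp q \<in> J n" by (rule J_right[OF J_Fpow])
  then show ?thesis using True by (simp add: nf_J)
next
  case False
  assume "a \<le> Suc n"
  with False have a: "a \<le> n" by simp
  have "NFt n (\<lambda>_. 0) (\<lambda>i. if i = a then q else 0) = gF ^ a * hp q"
    using a by (simp add: NFt_def if_distrib[of hp] if_distrib[of "\<lambda>y. _ * y"] sum.delta cong: if_cong)
  then show ?thesis unfolding nfr_def by (metis cg_refl)
qed

lemma nf_left:
  assumes E: "\<And>c p. c \<le> n \<Longrightarrow> nfr n (z * (gE ^ c * hp p))"
    and F: "\<And>a q. a \<le> n \<Longrightarrow> nfr n (z * (gF ^ a * hp q))"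
    and x: "nfr n x"
  shows "nfr n (z * x)"
proof -
  obtain P Q where "cg n x (NFt n P Q)" using x unfolding nfr_def by blast
  then have "cg n (z * x) (z * NFt n P Q)" by (rule cg_mult_left)
  moreover have "nfr n (z * NFt n P Q)"
    unfolding NFt_def distrib_left sum_distrib_left
    by (intro nf_add nf_sum E F) auto
  ultimately show ?thesis by (meson nf_cg)
qed

lemma nf_H: "nfr n x \<Longrightarrow> nfr n (gH * (x :: 'k::field_char_0 FA))"
proof (rule nf_left)
  fix c and p :: "'k poly" assume c: "c \<le> n"
  have "gH * (gE ^ c * hp p) = (hp [:0, 1:] * gE ^ c) * hp p" by (simp add: hp_X mult.assoc)
  also have "cg n \<dots> ((gE ^ c * hp (pcompose [:0, 1:] [:of_nat (2 * c), 1:])) * hp p)"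
    by (intro cg_mult_right cg_hp_Epow)
  also have "(gE ^ c * hp (pcompose [:0, 1:] [:of_nat (2 * c), 1:])) * hp p =
      gE ^ c * hp (pcompose [:0, 1:] [:of_nat (2 * c), 1:] * p)"
    by (simp add: hp_mult mult.assoc)
  finally have "cg n (gH * (gE ^ c * hp p)) (gE ^ c * hp (pcompose [:0, 1:] [:of_nat (2 * c), 1:] * p))" .
  then show "nfr n (gH * (gE ^ c * hp p))"
    by (rule nf_cg[OF nf_termE, rotated]) (use c in simp)
next
  fix a and q :: "'k poly" assume a: "a \<le> n"
  have "gH * (gF ^ a * hp q) = (hp [:0, 1:] * gF ^ a) * hp q" by (simp add: hp_X mult.assoc)
  also have "cg n \<dots> ((gF ^ a * hp (pcompose [:0, 1:] [:- of_nat (2 * a), 1:])) * hp q)"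
    by (intro cg_mult_right cg_hp_Fpow)
  also have "(gF ^ a * hp (pcompose [:0, 1:] [:- of_nat (2 * a), 1:])) * hp q =
      gF ^ a * hp (pcompose [:0, 1:] [:- of_nat (2 * a), 1:] * q)"
    by (simp add: hp_mult mult.assoc)
  finally have "cg n (gH * (gF ^ a * hp q)) (gF ^ a * hp (pcompose [:0, 1:] [:- of_nat (2 * a), 1:] * q))" .
  then show "nfr n (gH * (gF ^ a * hp q))"
    by (rule nf_cg[OF nf_termF, rotated]) (use a in simp)
qed

lemma nf_E: "nfr n x \<Longrightarrow> nfr n (gE * (x :: 'k::field_char_0 FA))"
proof (rule nf_left)
  fix c and p :: "'k poly" assume c: "c \<le> n"
  have "gE * (gE ^ c * hp p) = gE ^ Suc c * hp p" by (simp add: mult.assoc)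
  then show "nfr n (gE * (gE ^ c * hp p))" using nf_termE[of "Suc c" n p] c by simp
next
  fix a and q :: "'k poly" assume a: "a \<le> n"
  show "nfr n (gE * (gF ^ a * hp q))"
  proof (cases a)
    case 0
    then show ?thesis using nf_termE[of 1 n q] by simp
  next
    case (Suc b)
    let ?q = "[:- of_nat (Suc b * b), of_nat (Suc b):]"
    have "gE * (gF ^ Suc b * hp q) = (gE * gF ^ Suc b) * hp q" by (simp add: mult.assoc)
    also have "cg n \<dots> ((gF ^ Suc b * gE + gF ^ b * hp ?q) * hp q)"
      by (intro cg_mult_right cg_E_Fpow)
    also have "(gF ^ Suc b * gE + gF ^ b * hp ?q) * hp q = gF ^ b * ((gF * gE) * hp q) + gF ^ b * hp (?q * q)"
      by (simp only: hp_mult distrib_right mult.assoc power_Suc2)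
    also have "cg n \<dots> (gF ^ b * (hp (phi n) * hp q) + gF ^ b * hp (?q * q))"
      by (intro cg_add cg_refl cg_mult_left cg_mult_right cg_FE)
    also have "gF ^ b * (hp (phi n) * hp q) + gF ^ b * hp (?q * q) = gF ^ b * hp (phi n * q + ?q * q)"
      by (simp only: hp_mult hp_add distrib_left)
    finally have "cg n (gE * (gF ^ a * hp q)) (gF ^ b * hp (phi n * q + ?q * q))" using Suc by simp
    then show ?thesis
      by (rule nf_cg[OF nf_termF, rotated]) (use a Suc in simp)
  qed
qed

lemma nf_F: "nfr n x \<Longrightarrow> nfr n (gF * (x :: 'k::field_char_0 FA))"
proof (rule nf_left)
  fix a and q :: "'k poly" assume a: "a \<le> n"
  have "gF * (gF ^ a * hp q) = gF ^ Suc a * hp q" by (simp add: mult.assoc)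
  then show "nfr n (gF * (gF ^ a * hp q))" using nf_termF[of "Suc a" n q] a by simp
next
  fix c and p :: "'k poly" assume c: "c \<le> n"
  show "nfr n (gF * (gE ^ c * hp p))"
  proof (cases c)
    case 0
    then show ?thesis using nf_termF[of 1 n p] by simp
  next
    case (Suc b)
    have "gF * (gE ^ Suc b * hp p) = (gF * gE) * gE ^ b * hp p" by (simp add: mult.assoc)
    also have "cg n \<dots> (hp (phi n) * gE ^ b * hp p)"
      by (intro cg_mult_right cg_FE)
    also have "cg n \<dots> (gE ^ b * hp (pcompose (phi n) [:of_nat (2 * b), 1:]) * hp p)"
      by (intro cg_mult_right cg_hp_Epow)
    also have "gE ^ b * hp (pcompose (phi n) [:of_nat (2 * b), 1:]) * hp p =
        gE ^ b * hp (pcompose (phi n) [:of_nat (2 * b), 1:] * p)"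
      by (simp add: hp_mult mult.assoc)
    finally have "cg n (gF * (gE ^ c * hp p)) (gE ^ b * hp (pcompose (phi n) [:of_nat (2 * b), 1:] * p))"
      using Suc by simp
    then show ?thesis
      by (rule nf_cg[OF nf_termE, rotated]) (use c Suc in simp)
  qed
qed

lemma nf_sc: "nfr n x \<Longrightarrow> nfr n (sc d * (x :: 'k::field_char_0 FA))"
proof (rule nf_left)
  fix c and p :: "'k poly" assume c: "c \<le> n"
  have "sc d * (gE ^ c * hp p) = gE ^ c * hp (smult d p)"
    by (simp add: hp_smult) (metis mult.assoc sc_central)
  then show "nfr n (sc d * (gE ^ c * hp p))" using nf_termE[of c n "smult d p"] c by simp
next
  fix a and q :: "'k poly" assume a: "a \<le> n"
  have "sc d * (gF ^ a * hp q) = gF ^ a * hp (smult d q)"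
    by (simp add: hp_smult) (metis mult.assoc sc_central)
  then show "nfr n (sc d * (gF ^ a * hp q))" using nf_termF[of a n "smult d q"] a by simp
qed

lemma nf_wd: "nfr n (wd w :: 'k::field_char_0 FA)"
proof (induction w)
  case Nil
  then show ?case using nf_termE[of 0 n "1 :: 'k poly"] by (simp add: wd_Nil hp_one)
next
  case (Cons g w)
  have e: "wd (g # w) = wd [g] * (wd w :: 'k FA)" by (rule wd_Cons)
  show ?case unfolding e
    by (cases g) (simp_all add: Cons nf_E nf_H nf_F flip: gE_def gH_def gF_def)
qed

lemma nf_all: "nfr n (x :: 'k::field_char_0 FA)"
  by (subst FA_decomp) (intro nf_sum nf_sc nf_wd)

lemma ev_gen: "ev n (wd [g]) = (gen_op n g :: 'k::field poly \<Rightarrow> _)"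
proof
  fix p :: "'k poly"
  show "ev n (wd [g]) p = gen_op n g p"
    by (cases "p \<in> On n") (simp_all add: ev_wd Idn_in Idn_out gen_op_out del: gen_op.simps,
        simp add: End_zero[OF End_gen_op] del: gen_op.simps)
qed

lemma ev_gE: "ev n gE = (gen_op n E :: 'k::field poly \<Rightarrow> _)"
  unfolding gE_def by (rule ev_gen)
lemma ev_gH: "ev n gH = (gen_op n H :: 'k::field poly \<Rightarrow> _)"
  unfolding gH_def by (rule ev_gen)
lemma ev_gF: "ev n gF = (gen_op n F :: 'k::field poly \<Rightarrow> _)"
  unfolding gF_def by (rule ev_gen)

lemma ev_Epow_monom: "m \<le> n \<Longrightarrow>
   ev n (gE ^ c) (monom b m) = (if m + c \<le> n then monom b (m + c) else (0 :: 'k::field poly))"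
proof (induction c)
  case 0
  then show ?case by (simp add: ev_one Idn_in)
next
  case (Suc c)
  then show ?case
    by (auto simp: ev_mult ev_gE gen_E_monom End_zero[OF End_gen_op] simp del: gen_op.simps)
qed

definition kap :: "nat \<Rightarrow> nat \<Rightarrow> nat \<Rightarrow> 'k::comm_ring_1" where
  "kap n a m = (\<Prod>i<a. of_nat (m - i) * (of_nat n - of_nat (m - i - 1)))"

lemma kap_Suc: "kap n (Suc a) m = of_nat m * (of_nat n - of_nat (m - 1)) * kap n a (m - 1)"
  unfolding kap_def by (simp only: prod.lessThan_Suc_shift diff_Suc_eq_diff_pred diff_zero)

lemma ev_Fpow_monom: "m \<le> n \<Longrightarrow>
   ev n (gF ^ a) (monom b m) = (if a \<le> m then monom (kap n a m * b) (m - a) else (0 :: 'k::field poly))"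
proof (induction a arbitrary: m b)
  case 0
  then show ?case by (simp add: ev_one Idn_in kap_def)
next
  case (Suc a)
  have "ev n (gF ^ Suc a) (monom b m) = ev n (gF ^ a) (gen_op n F (monom b m))"
    by (simp only: power_Suc2 ev_mult ev_gF)
  also have "\<dots> = ev n (gF ^ a) (monom (of_nat m * (of_nat n - of_nat (m - 1)) * b) (m - 1))"
    using Suc.prems by (simp add: gen_F_monom del: gen_op.simps)
  also have "\<dots> = (if Suc a \<le> m then monom (kap n (Suc a) m * b) (m - Suc a) else 0)"
  proof (cases m)
    case 0
    then show ?thesis by (simp add: End_zero[OF End_ev])
  next
    case (Suc m')
    then show ?thesis using Suc.IH[of m'] Suc.prems by (simp add: kap_Suc algebra_simps)
  qed
  finally show ?case .
qed

lemma kap_nz: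
  assumes "a \<le> m" "m \<le> n"
  shows "kap n a m \<noteq> (0::'k::field_char_0)"
proof -
  have nz: "of_nat (m - i) * (of_nat n - of_nat (m - i - 1)) \<noteq> (0::'k)" if i: "i < a" for i
  proof -
    have "(of_nat (m - i) :: 'k) \<noteq> 0" using i assms by simp
    moreover have "(of_nat n - of_nat (m - i - 1) :: 'k) \<noteq> 0"
    proof
      assume "(of_nat n - of_nat (m - i - 1) :: 'k) = 0"
      then have "(of_nat n :: 'k) = of_nat (m - i - 1)" by simp
      then have "n = m - i - 1" by (simp only: of_nat_eq_iff)
      then show False using i assms by linarith
    qed
    ultimately show ?thesis by simp
  qed
  show ?thesis unfolding kap_def
    by (subst prod_zero_iff[OF finite_lessThan]) (use nz in blast)
qed

lemma ev_hp_monom: "m \<le> n \<Longrightarrow>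
   ev n (hp p) (monom b m) = (monom (poly p (wt n m) * b) m :: 'k::field poly)"
proof (induction p rule: pCons_induct)
  case 0
  then show ?case by (simp add: ev_zero)
next
  case (pCons a p)
  then show ?case
    by (simp add: hp_pCons ev_add ev_sc ev_mult ev_gH gen_H_monom Idn_in wt_def smult_monom
        algebra_simps add_monom del: gen_op.simps)
qed

lemma End_zero_fun: "is_End n (\<lambda>_. 0 :: 'k::field poly)"
  by (rule is_EndI) auto

lemma ev_zeroI: "(\<And>m. m \<le> n \<Longrightarrow> ev n x (monom 1 m) = 0) \<Longrightarrow> ev n x = (\<lambda>_. 0 :: 'k::field poly)"
  by (rule End_eqI[OF End_ev End_zero_fun]) auto

lemma ev_R1: "ev n (gE * gF - gF * gE - gH) = (\<lambda>_. 0 :: 'k::field poly)"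
proof (rule ev_zeroI)
  fix m assume m: "m \<le> n"
  show "ev n (gE * gF - gF * gE - gH) (monom 1 m) = (0 :: 'k poly)"
    unfolding ev_diff ev_mult ev_gE ev_gF ev_gH using m
    by (cases m) (auto simp: gen_E_monom gen_F_monom gen_H_monom
        End_zero[OF End_gen_op] add_monom diff_monom minus_monom algebra_simps of_nat_diff simp del: gen_op.simps monom_eq_1)
qed

lemma ev_R2: "ev n (gH * gE - gE * gH - sc 2 * gE) = (\<lambda>_. 0 :: 'k::field poly)"
proof (rule ev_zeroI)
  fix m assume m: "m \<le> n"
  show "ev n (gH * gE - gE * gH - sc 2 * gE) (monom 1 m) = (0 :: 'k poly)"
    unfolding ev_diff ev_mult ev_sc_mult ev_gE ev_gF ev_gH using m
    by (cases m) (auto simp: gen_E_monom gen_F_monom gen_H_monom smult_monom ev_sc Idn_in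
        End_zero[OF End_gen_op] add_monom diff_monom minus_monom algebra_simps of_nat_diff
        simp del: gen_op.simps monom_eq_1)
qed

lemma ev_R3: "ev n (gH * gF - gF * gH + sc 2 * gF) = (\<lambda>_. 0 :: 'k::field poly)"
proof (rule ev_zeroI)
  fix m assume m: "m \<le> n"
  show "ev n (gH * gF - gF * gH + sc 2 * gF) (monom 1 m) = (0 :: 'k poly)"
    unfolding ev_diff ev_add ev_mult ev_sc_mult ev_gE ev_gF ev_gH using m
    by (cases m) (auto simp: gen_E_monom gen_F_monom gen_H_monom smult_monom ev_sc Idn_in
        End_zero[OF End_gen_op] add_monom diff_monom minus_monom algebra_simps of_nat_diff
        simp del: gen_op.simps monom_eq_1)
qed

lemma ev_Cas: "ev n (gH * gH + sc 2 * (gE * gF + gF * gE) - sc (of_nat (n * (n + 2)))) = (\<lambda>_. 0 :: 'k::field poly)"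
proof (rule ev_zeroI)
  fix m assume m: "m \<le> n"
  show "ev n (gH * gH + sc 2 * (gE * gF + gF * gE) - sc (of_nat (n * (n + 2)))) (monom 1 m) = (0 :: 'k poly)"
    unfolding ev_diff ev_add ev_mult ev_sc_mult ev_sc ev_gE ev_gF ev_gH using m
    by (cases m) (auto simp: gen_E_monom gen_F_monom gen_H_monom smult_monom Idn_in
        End_zero[OF End_gen_op] add_monom diff_monom minus_monom algebra_simps of_nat_diff
        simp del: gen_op.simps monom_eq_1)
qed

lemma ev_Epow: "ev n (gE ^ Suc n) = (\<lambda>_. 0 :: 'k::field poly)"
  by (rule ev_zeroI) (simp add: ev_Epow_monom del: power_Suc)

lemma fa_eval_rep: "fa_eval n (repFA x) = ev n x"
  by (simp add: ev_def)

lemma Sgen_cases: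
  assumes "a \<in> Sgen n"
  shows "\<exists>x::'k::comm_ring_1 FA. a = repFA x \<and>
    (x = gE * gF - gF * gE - gH \<or> x = gH * gE - gE * gH - sc 2 * gE \<or>
     x = gH * gF - gF * gH + sc 2 * gF \<or>
     x = gH * gH + sc 2 * (gE * gF + gF * gE) - sc (of_nat (n * (n + 2))) \<or> x = gE ^ Suc n)"
proof -
  have r1: "repFA (gE * gF - gF * gE - gH :: 'k FA) = fa_sub (fa_bracket (fa_gen E) (fa_gen F)) (fa_gen H)"
    by (simp add: repFA_mult repFA_diff gE_def gF_def gH_def repFA_wd fa_bracket_def fa_gen_def)
  have r2: "repFA (gH * gE - gE * gH - sc 2 * gE :: 'k FA) = fa_sub (fa_bracket (fa_gen H) (fa_gen E)) (fa_smult 2 (fa_gen E))"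
    by (simp add: repFA_mult repFA_diff gE_def gF_def gH_def repFA_wd fa_bracket_def fa_gen_def
        repFA_sc fa_mul_const_left)
  have r3: "repFA (gH * gF - gF * gH + sc 2 * gF :: 'k FA) = fa_add (fa_bracket (fa_gen H) (fa_gen F)) (fa_smult 2 (fa_gen F))"
    by (simp add: repFA_mult repFA_diff gE_def gF_def gH_def repFA_wd fa_bracket_def fa_gen_def
        repFA_sc fa_mul_const_left repFA_add')
  have r4: "repFA (gH * gH + sc 2 * (gE * gF + gF * gE) - sc (of_nat (n * (n + 2))) :: 'k FA) =
      fa_sub casimir (fa_const (of_nat (n * (n + 2))))"
    by (simp add: casimir_def repFA_mult repFA_diff gE_def gF_def gH_def
      repFA_wd fa_gen_def fa_mul_const_left repFA_add' repFA_sc)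
  have r5: "repFA (gE ^ Suc n :: 'k FA) = fa_word (replicate (Suc n) E)"
    by (simp only: gE_pow repFA_wd)
  have "a = fa_sub (fa_bracket (fa_gen E) (fa_gen F)) (fa_gen H) \<or>
      a = fa_sub (fa_bracket (fa_gen H) (fa_gen E)) (fa_smult 2 (fa_gen E)) \<or>
      a = fa_add (fa_bracket (fa_gen H) (fa_gen F)) (fa_smult 2 (fa_gen F)) \<or>
      a = fa_sub casimir (fa_const (of_nat (n * (n + 2)))) \<or>
      a = fa_word (replicate (Suc n) E)"
    using assms unfolding Sgen_def sl2_relations_def by blast
  then show ?thesis
  proof (elim disjE)
    assume "a = fa_sub (fa_bracket (fa_gen E) (fa_gen F)) (fa_gen H)"
    then show ?thesis using r1 by metis
  next
    assume "a = fa_sub (fa_bracket (fa_gen H) (fa_gen E)) (fa_smult 2 (fa_gen E))"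
    then show ?thesis using r2 by metis
  next
    assume "a = fa_add (fa_bracket (fa_gen H) (fa_gen F)) (fa_smult 2 (fa_gen F))"
    then show ?thesis using r3 by metis
  next
    assume "a = fa_sub casimir (fa_const (of_nat (n * (n + 2))))"
    then show ?thesis using r4 by metis
  next
    assume "a = fa_word (replicate (Suc n) E)"
    then show ?thesis using r5 by metis
  qed
qed

lemma ideal_ker:
  "a \<in> fa_ideal (Sgen n) \<Longrightarrow> fin_supp a \<and> fa_eval n a = (\<lambda>_. 0 :: 'k::field poly)"
proof (induction rule: fa_ideal.induct)
  case (gen g)
  then obtain x :: "'k FA" where x: "g = repFA x"
    "x = gE * gF - gF * gE - gH \<or> x = gH * gE - gE * gH - sc 2 * gE \<or>
     x = gH * gF - gF * gH + sc 2 * gF \<or>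
     x = gH * gH + sc 2 * (gE * gF + gF * gE) - sc (of_nat (n * (n + 2))) \<or> x = gE ^ Suc n"
    using Sgen_cases by blast
  have "fin_supp g" using x(1) repFA by auto
  moreover have "ev n x = (\<lambda>_. 0)" using x(2) ev_R1 ev_R2 ev_R3 ev_Cas ev_Epow by metis
  ultimately show ?case using x(1) by (simp add: fa_eval_rep)
next
  case zero
  then show ?case by (simp add: fin_supp_fa_zero fa_eval_def fa_zero_def fin_supp_def)
next
  case (add a b)
  then have "fa_add a b = repFA (absFA a + absFA b)"
    by (simp add: repFA_add' absFA_inverse)
  moreover have "ev n (absFA a + absFA b) = (\<lambda>_. 0)"
  proof -
    have "ev n (absFA a) = fa_eval n a" "ev n (absFA b) = fa_eval n b"
      using add by (simp_all add: ev_def absFA_inverse)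
    then show ?thesis using add by (simp add: ev_add fun_eq_iff)
  qed
  ultimately show ?case using repFA[of "absFA a + absFA b"] by (simp add: fa_eval_rep)
next
  case (mul a u v)
  then have "fa_mul (fa_mul u a) v = repFA (absFA u * absFA a * absFA v)"
    by (simp add: repFA_mult absFA_inverse)
  moreover have "ev n (absFA u * absFA a * absFA v) = (\<lambda>_. 0)"
  proof -
    have "ev n (absFA a) = fa_eval n a"
      using mul by (simp_all add: ev_def absFA_inverse)
    then show ?thesis using mul by (simp add: ev_mult fun_eq_iff End_zero[OF End_ev])
  qed
  ultimately show ?case using repFA[of "absFA u * absFA a * absFA v"] by (simp add: fa_eval_rep)
qed

lemma ev_J: "x \<in> J n \<Longrightarrow> ev n x = (\<lambda>_. 0 :: 'k::field poly)"
  unfolding J_def using ideal_ker[of "repFA x" n] by (simp add: fa_eval_rep)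

lemma prod_roots_dvd:
  fixes \<mu> :: "nat \<Rightarrow> 'k::field"
  assumes "inj_on \<mu> {..<N}" "\<And>j. j < N \<Longrightarrow> poly p (\<mu> j) = 0"
  shows "(\<Prod>j<N. [:- \<mu> j, 1:]) dvd p"
  using assms
proof (induction N)
  case 0
  then show ?case by simp
next
  case (Suc N)
  have "inj_on \<mu> {..<N}" using Suc.prems(1) by (rule inj_on_subset) auto
  then have "(\<Prod>j<N. [:- \<mu> j, 1:]) dvd p" using Suc.IH Suc.prems(2) by auto
  then obtain q where q: "p = (\<Prod>j<N. [:- \<mu> j, 1:]) * q" by (elim dvdE)
  have "poly (\<Prod>j<N. [:- \<mu> j, 1:]) (\<mu> N) \<noteq> 0"
  proof -
    have "\<mu> N - \<mu> j \<noteq> 0" if "j < N" for j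
      using Suc.prems(1) that by (auto dest: inj_onD)
    then show ?thesis by (simp add: poly_prod)
  qed
  moreover have "poly p (\<mu> N) = 0" using Suc.prems(2) by simp
  ultimately have "poly q (\<mu> N) = 0" using q by simp
  then have d: "[:- \<mu> N, 1:] dvd q" by (simp add: dvd_iff_poly_eq_0)
  have e: "(\<Prod>j<Suc N. [:- \<mu> j, 1:]) = (\<Prod>j<N. [:- \<mu> j, 1:]) * [:- \<mu> N, 1:]" by simp
  show ?case unfolding e by (subst q) (rule mult_dvd_mono[OF dvd_refl d])
qed

lemma inj_wt: "inj_on (wt n :: nat \<Rightarrow> 'k::field_char_0) A"
  by (rule inj_onI) (simp add: wt_def)

lemma sum_if_unique:
  assumes "finite A" "k \<in> A" "\<And>i. i \<in> A \<Longrightarrow> P i \<longleftrightarrow> i = k"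
  shows "(\<Sum>i\<in>A. if P i then f i else 0) = (f k :: 'a::comm_monoid_add)"
proof -
  have "(\<Sum>i\<in>A. if P i then f i else 0) = (\<Sum>i\<in>A. if i = k then f i else 0)"
    using assms(3) by (intro sum.cong) auto
  also have "\<dots> = f k" using assms(1,2) by (simp add: sum.delta')
  finally show ?thesis .
qed

lemma sum_if_none:
  assumes "\<And>i. i \<in> A \<Longrightarrow> \<not> P i"
  shows "(\<Sum>i\<in>A. if P i then f i else 0) = (0 :: 'a::comm_monoid_add)"
  using assms by (intro sum.neutral) auto

lemma ev_term_E: "m \<le> n \<Longrightarrow> ev n (gE ^ c * hp p) (monom 1 m) =
   (if m + c \<le> n then monom (poly p (wt n m)) (m + c) else (0 :: 'k::field poly))"
  by (simp add: ev_mult ev_hp_monom ev_Epow_monom)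

lemma ev_term_F: "m \<le> n \<Longrightarrow> ev n (gF ^ a * hp q) (monom 1 m) =
   (if a \<le> m then monom (kap n a m * poly q (wt n m)) (m - a) else (0 :: 'k::field poly))"
  by (simp add: ev_mult ev_hp_monom ev_Fpow_monom)

lemma coeff_ev_NFt:
  assumes m: "m \<le> n"
  shows "coeff (ev n (NFt n P Q) (monom 1 m)) j =
    (\<Sum>c\<le>n. if m + c \<le> n \<and> j = m + c then poly (P c) (wt n m) else 0) +
    (\<Sum>a\<le>n. if a \<le> m \<and> j = m - a then kap n a m * poly (Q a) (wt n m) else (0::'k::field))"
  unfolding NFt_def ev_add ev_sum coeff_add coeff_sum
  using m apply (simp add: ev_term_E ev_term_F coeff_monom if_distrib[of "\<lambda>p. coeff p j"])
  apply (intro arg_cong2[where f="(+)"] sum.cong refl)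
   apply auto
  done

lemma ker_J:
  assumes ev0: "ev n x = (\<lambda>_. 0 :: 'k::field_char_0 poly)"
  shows "x \<in> J n"
proof -
  obtain P Q where xc: "cg n x (NFt n P Q)" using nf_all[of n x] unfolding nfr_def by blast
  have evN: "ev n (NFt n P Q) p = 0" for p
  proof -
    have "x - NFt n P Q \<in> J n" using xc by (simp add: cg_def)
    then have "ev n (x - NFt n P Q) p = 0" by (simp add: ev_J)
    then show ?thesis using ev0 by (simp add: ev_diff)
  qed
  have cf: "(\<Sum>c\<le>n. if m + c \<le> n \<and> j = m + c then poly (P c) (wt n m) else 0) +
    (\<Sum>a\<le>n. if a \<le> m \<and> j = m - a then kap n a m * poly (Q a) (wt n m) else (0::'k)) = 0"
    if "m \<le> n" for m j
    using coeff_ev_NFt[OF that, of P Q j] evN by simp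
  have PE: "poly (P c) (wt n m) = 0" if "1 \<le> c" "m + c \<le> n" for c m
  proof -
    have "(\<Sum>c'\<le>n. if m + c' \<le> n \<and> m + c = m + c' then poly (P c') (wt n m) else 0) = poly (P c) (wt n m)"
      by (rule sum_if_unique) (use that in auto)
    moreover have "(\<Sum>a\<le>n. if a \<le> m \<and> m + c = m - a then kap n a m * poly (Q a) (wt n m) else (0::'k)) = 0"
      by (rule sum_if_none) (use that in auto)
    ultimately show ?thesis using cf[of m "m + c"] that by simp
  qed
  have QF: "poly (Q a) (wt n m) = 0" if "1 \<le> a" "a \<le> m" "m \<le> n" for a m
  proof -
    have "(\<Sum>c'\<le>n. if m + c' \<le> n \<and> m - a = m + c' then poly (P c') (wt n m) else 0) = 0"
      by (rule sum_if_none) (use that in auto)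
    moreover have "(\<Sum>a'\<le>n. if a' \<le> m \<and> m - a = m - a' then kap n a' m * poly (Q a') (wt n m) else (0::'k))
        = kap n a m * poly (Q a) (wt n m)"
      by (rule sum_if_unique) (use that in auto)
    ultimately have "kap n a m * poly (Q a) (wt n m) = 0" using cf[of m "m - a"] that by simp
    moreover have "kap n a m \<noteq> (0::'k)" using kap_nz that by blast
    ultimately show ?thesis by simp
  qed
  have P0: "poly (P 0 + Q 0) (wt n m) = 0" if "m \<le> n" for m
  proof -
    have "(\<Sum>c'\<le>n. if m + c' \<le> n \<and> m = m + c' then poly (P c') (wt n m) else 0) = poly (P 0) (wt n m)"
      by (rule sum_if_unique) (use that in auto)
    moreover have "(\<Sum>a'\<le>n. if a' \<le> m \<and> m = m - a' then kap n a' m * poly (Q a') (wt n m) else (0::'k))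
        = kap n 0 m * poly (Q 0) (wt n m)"
      by (rule sum_if_unique) (use that in auto)
    ultimately show ?thesis using cf[of m m] that by (simp add: kap_def)
  qed
  have JE: "gE ^ c * hp (P c) \<in> J n" if "1 \<le> c" "c \<le> n" for c
  proof -
    have "rr n c dvd P c" unfolding rr_def
      by (rule prod_roots_dvd[OF inj_wt]) (use PE that in auto)
    then obtain q where q: "P c = rr n c * q" by (elim dvdE)
    have "gE ^ c * hp (rr n c :: 'k poly) * hp q \<in> J n" by (rule J_right) (use E_chain[of c n] that in simp)
    then show ?thesis by (simp add: q hp_mult mult.assoc)
  qed
  have JF: "gF ^ a * hp (Q a) \<in> J n" if "1 \<le> a" "a \<le> n" for a
  proof -
    have "ss n a dvd Q a" unfolding ss_def
    proof (rule prod_roots_dvd[where \<mu>="\<lambda>j. wt n (a + j)"])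
      show "inj_on (\<lambda>j. wt n (a + j) :: 'k) {..<Suc n - a}"
        by (rule inj_onI) (simp add: wt_def)
      fix j assume "j < Suc n - a"
      then show "poly (Q a) (wt n (a + j)) = 0" using QF[of a "a + j"] that by simp
    qed
    then obtain q where q: "Q a = ss n a * q" by (elim dvdE)
    have "gF ^ a * hp (ss n a :: 'k poly) * hp q \<in> J n" by (rule J_right) (use F_chain[of a n] that in simp)
    then show ?thesis by (simp add: q hp_mult mult.assoc)
  qed
  have J0: "hp (P 0 + Q 0) \<in> J n"
  proof -
    have "rr n 0 dvd P 0 + Q 0" unfolding rr_def
      by (rule prod_roots_dvd[OF inj_wt]) (use P0 in auto)
    then obtain q where q: "P 0 + Q 0 = rr n 0 * q" by (elim dvdE)
    have "gE ^ 0 * hp (rr n 0 :: 'k poly) * hp q \<in> J n" by (rule J_right) (use E_chain[of 0 n] in simp)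
    then show ?thesis by (simp add: q hp_mult)
  qed
  have split: "NFt n P Q = hp (P 0 + Q 0) + (\<Sum>c\<in>{1..n}. gE ^ c * hp (P c)) + (\<Sum>a\<in>{1..n}. gF ^ a * hp (Q a))"
    unfolding NFt_def atMost_atLeast0 by (simp add: sum.atLeast_Suc_atMost hp_add algebra_simps)
  have "NFt n P Q \<in> J n"
    unfolding split by (intro J_add J0 J_sum JE JF) auto
  then show ?thesis using xc by (meson cg_J' cg_sym)
qed

definition Uij :: "nat \<Rightarrow> nat \<Rightarrow> nat \<Rightarrow> 'k::comm_ring_1 FA" where
  "Uij n i j = gE ^ i * gF ^ n * gE ^ n * gF ^ j"

lemma ev_Uij:
  assumes "i \<le> n" "j \<le> n" "m \<le> n"
  shows "ev n (Uij n i j) (monom 1 m) =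
    (if m = j then monom (kap n n n * kap n j j) i else (0::'k::field poly))"
proof (cases "j \<le> m")
  case True
  have "ev n (Uij n i j) (monom 1 m) = ev n (gE ^ i) (ev n (gF ^ n) (ev n (gE ^ n) (monom (kap n j m) (m - j))))"
    using True assms by (simp add: Uij_def ev_mult ev_Fpow_monom)
  also have "\<dots> = (if m = j then monom (kap n n n * kap n j j) i else 0)"
  proof (cases "m = j")
    case True
    then show ?thesis using assms by (simp add: ev_Epow_monom ev_Fpow_monom)
  next
    case False
    then have "\<not> m - j + n \<le> n" using \<open>j \<le> m\<close> by simp
    then show ?thesis using assms False by (simp add: ev_Epow_monom End_zero[OF End_ev])
  qed
  finally show ?thesis .
next
  case False
  then show ?thesis using assms by (simp add: Uij_def ev_mult ev_Fpow_monom End_zero[OF End_ev])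
qed

lemma surj_ev:
  assumes \<delta>: "is_End n \<delta>"
  shows "\<exists>x. ev n x = (\<delta> :: 'k::field_char_0 poly \<Rightarrow> _)"
proof -
  define K :: "nat \<Rightarrow> 'k" where "K j = kap n n n * kap n j j" for j
  have K: "K j \<noteq> 0" if "j \<le> n" for j
    using that kap_nz[of n n n] kap_nz[of j j n] by (simp add: K_def)
  define x :: "'k FA" where
    "x = (\<Sum>i\<le>n. \<Sum>j\<le>n. sc (coeff (\<delta> (monom 1 j)) i / K j) * Uij n i j)"
  have "ev n x = \<delta>"
  proof (rule End_eqI[OF End_ev \<delta>])
    fix m assume m: "m \<le> n"
    have "ev n x (monom 1 m) = (\<Sum>i\<le>n. \<Sum>j\<le>n. smult (coeff (\<delta> (monom 1 j)) i / K j) (ev n (Uij n i j) (monom 1 m)))"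
      by (simp add: x_def ev_sum ev_sc_mult)
    also have "\<dots> = (\<Sum>i\<le>n. \<Sum>j\<le>n. if j = m then monom (coeff (\<delta> (monom 1 m)) i) i else 0)"
      using m K by (intro sum.cong refl) (auto simp: ev_Uij smult_monom K_def)
    also have "\<dots> = (\<Sum>i\<le>n. monom (coeff (\<delta> (monom 1 m)) i) i)"
      using m by (simp add: sum.delta)
    also have "\<dots> = \<delta> (monom 1 m)"
      using End_On[OF \<delta>, of "monom 1 m"] by (simp add: poly_as_sum_of_monoms' On_iff)
    finally show "ev n x (monom 1 m) = \<delta> (monom 1 m)" .
  qed
  then show ?thesis by blast
qed

definition ordp :: "nat \<Rightarrow> nat \<Rightarrow> ('k::field poly \<Rightarrow> 'k poly) \<Rightarrow> bool" where
  "ordp n p \<delta> \<longleftrightarrow> (\<forall>fs. length fs = Suc p \<longrightarrow> set fs \<subseteq> On n \<longrightarrow> iter_comm n fs \<delta> = (\<lambda>_. 0))"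

lemma Diff_iff: "\<delta> \<in> Diff n p \<longleftrightarrow> is_End n \<delta> \<and> ordp n p \<delta>"
  by (simp add: Diff_def ordp_def)

lemma iter_comm_snoc: "iter_comm n (fs @ [f]) \<delta> = iter_comm n fs (comm (Lmul n f) \<delta>)"
  by (induction fs) simp_all

lemma ordp_0: "ordp n 0 (\<delta> :: 'k::field poly \<Rightarrow> _) \<longleftrightarrow> (\<forall>f\<in>On n. comm (Lmul n f) \<delta> = (\<lambda>_. 0))"
proof
  assume "ordp n 0 \<delta>"
  then show "\<forall>f\<in>On n. comm (Lmul n f) \<delta> = (\<lambda>_. 0)"
    unfolding ordp_def by (metis (no_types, lifting) One_nat_def empty_subsetI insert_subset
        iter_comm.simps length_Cons list.set(1,2) list.size(3))
next
  assume *: "\<forall>f\<in>On n. comm (Lmul n f) \<delta> = (\<lambda>_. 0)"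
  show "ordp n 0 \<delta>" unfolding ordp_def
  proof (intro allI impI)
    fix fs :: "'k poly list" assume "length fs = Suc 0" "set fs \<subseteq> On n"
    then obtain f where "fs = [f]" "f \<in> On n" by (cases fs) auto
    then show "iter_comm n fs \<delta> = (\<lambda>_. 0)" using * by simp
  qed
qed

lemma ordp_Suc: "ordp n (Suc p) (\<delta> :: 'k::field poly \<Rightarrow> _) \<longleftrightarrow> (\<forall>f\<in>On n. ordp n p (comm (Lmul n f) \<delta>))"
proof
  assume *: "ordp n (Suc p) \<delta>"
  show "\<forall>f\<in>On n. ordp n p (comm (Lmul n f) \<delta>)"
  proof (intro ballI)
    fix f :: "'k poly" assume f: "f \<in> On n"
    show "ordp n p (comm (Lmul n f) \<delta>)" unfolding ordp_def
    proof (intro allI impI)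
      fix fs :: "'k poly list" assume "length fs = Suc p" "set fs \<subseteq> On n"
      then show "iter_comm n fs (comm (Lmul n f) \<delta>) = (\<lambda>_. 0)"
        using * f unfolding ordp_def by (metis iter_comm_snoc length_append_singleton set_append
            Un_subset_iff empty_subsetI insert_subset list.set(1,2))
    qed
  qed
next
  assume *: "\<forall>f\<in>On n. ordp n p (comm (Lmul n f) \<delta>)"
  show "ordp n (Suc p) \<delta>" unfolding ordp_def
  proof (intro allI impI)
    fix fs :: "'k poly list" assume l: "length fs = Suc (Suc p)" and s: "set fs \<subseteq> On n"
    then obtain gs f where fs: "fs = gs @ [f]" by (metis length_Suc_conv rev_exhaust list.distinct(1))
    then have "length gs = Suc p" "set gs \<subseteq> On n" "f \<in> On n" using l s by auto
    then show "iter_comm n fs \<delta> = (\<lambda>_. 0)"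
      using * unfolding fs iter_comm_snoc ordp_def by blast
  qed
qed

lemma Lmul_zero[simp]: "Lmul n f 0 = 0"
  by (simp add: Lmul_def restr_def omult_def)

lemma End_Lmul: "is_End n (Lmul n f :: 'k::field poly \<Rightarrow> _)"
proof (rule is_EndI)
  fix p q :: "'k poly" assume "p \<in> On n" "q \<in> On n"
  then show "Lmul n f (p + q) = Lmul n f p + Lmul n f q"
    by (simp add: Lmul_def restr_def omult_def distrib_left poly_mod_add_left)
next
  fix c and p :: "'k poly" assume "p \<in> On n"
  then show "Lmul n f (smult c p) = smult c (Lmul n f p)"
    by (simp add: Lmul_def restr_def omult_def mod_smult_left)
qed (auto simp: Lmul_out)

lemma End_comm: "is_End n A \<Longrightarrow> is_End n B \<Longrightarrow> is_End n (comm A (B :: 'k::field poly \<Rightarrow> _))"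
  unfolding comm_def
  by (rule is_EndI) (auto simp: End_On End_add End_smult End_out End_zero algebra_simps smult_diff_right)

lemma comm_zero: "is_End n A \<Longrightarrow> comm A (\<lambda>_. 0) = (\<lambda>_. 0 :: 'k::field poly)"
  by (simp add: comm_def End_zero fun_eq_iff)

lemma iter_comm_zero: "iter_comm n fs (\<lambda>_. 0) = (\<lambda>_. 0 :: 'k::field poly)"
  by (induction fs) (simp_all add: comm_zero[OF End_Lmul])

lemma ordp_zero: "ordp n p (\<lambda>_. 0 :: 'k::field poly)"
  by (simp add: ordp_def iter_comm_zero)

lemma End_iter_comm: "is_End n \<delta> \<Longrightarrow> is_End n (iter_comm n fs (\<delta> :: 'k::field poly \<Rightarrow> _))"
  by (induction fs) (simp_all add: End_comm End_Lmul)

lemma End_plus: "is_End n A \<Longrightarrow> is_End n B \<Longrightarrow> is_End n (\<lambda>p. A p + (B p :: 'k::field poly))"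
  by (rule is_EndI) (auto simp: End_On End_add End_smult End_out algebra_simps smult_add_right)

lemma comm_plus: "is_End n L \<Longrightarrow> is_End n A \<Longrightarrow> is_End n B \<Longrightarrow>
   comm L (\<lambda>p. A p + B p) = (\<lambda>p. comm L A p + comm L (B :: 'k::field poly \<Rightarrow> _) p)"
  by (simp add: comm_def fun_eq_iff End_add End_On)

lemma iter_comm_plus:
  assumes A: "is_End n A" and B: "is_End n B"
  shows "iter_comm n fs (\<lambda>p. A p + B p) = (\<lambda>p. iter_comm n fs A p + iter_comm n fs (B :: 'k::field poly \<Rightarrow> _) p)"
proof (induction fs)
  case Nil
  then show ?case by simp
next
  case (Cons f fs)
  then show ?case
    using comm_plus[OF End_Lmul End_iter_comm[OF A] End_iter_comm[OF B], of f fs fs] by simp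
qed

lemma ordp_plus: "is_End n A \<Longrightarrow> is_End n B \<Longrightarrow> ordp n p A \<Longrightarrow> ordp n p B \<Longrightarrow>
   ordp n p (\<lambda>x. A x + (B x :: 'k::field poly))"
  unfolding ordp_def by (simp add: iter_comm_plus)

lemma ordp_Suc_mono: "ordp n p \<delta> \<Longrightarrow> ordp n (Suc p) (\<delta> :: 'k::field poly \<Rightarrow> _)"
proof (induction p arbitrary: \<delta>)
  case 0
  then show ?case by (simp add: ordp_Suc ordp_0 ordp_zero)
next
  case (Suc p)
  then show ?case by (metis ordp_Suc)
qed

lemma ordp_mono: "ordp n p \<delta> \<Longrightarrow> p \<le> q \<Longrightarrow> ordp n q (\<delta> :: 'k::field poly \<Rightarrow> _)"
proof (induction q)
  case 0
  then show ?case by simp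
next
  case (Suc q)
  then show ?case by (metis le_Suc_eq ordp_Suc_mono)
qed

lemma comm_comp: "is_End n L \<Longrightarrow> is_End n A \<Longrightarrow> is_End n B \<Longrightarrow>
   comm L (\<lambda>p. A (B p)) = (\<lambda>p. comm L A (B p) + A (comm L (B :: 'k::field poly \<Rightarrow> _) p))"
  by (simp add: comm_def fun_eq_iff End_diff End_On)

lemma ordp_comp:
  assumes "is_End n A" "is_End n B" "ordp n p A" "ordp n q B"
  shows "ordp n (p + q) (\<lambda>x. A (B x) :: 'k::field poly)"
  using assms
proof (induction "p + q" arbitrary: p q A B)
  case 0
  then have p: "p = 0" "q = 0" by auto
  show ?case unfolding p add_0 ordp_0
  proof
    fix f :: "'k poly" assume f: "f \<in> On n"
    have "comm (Lmul n f) A = (\<lambda>_. 0)" "comm (Lmul n f) B = (\<lambda>_. 0)"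
      using "0.prems" f p by (simp_all add: ordp_0)
    then show "comm (Lmul n f) (\<lambda>x. A (B x)) = (\<lambda>_. 0)"
      using comm_comp[OF End_Lmul "0.prems"(1,2), of f] by (simp add: End_zero[OF "0.prems"(1)])
  qed
next
  case (Suc M)
  show ?case unfolding Suc.hyps(2)[symmetric] ordp_Suc
  proof
    fix f :: "'k poly" assume f: "f \<in> On n"
    have EL: "is_End n (Lmul n f)" by (rule End_Lmul)
    have o1: "ordp n M (\<lambda>x. comm (Lmul n f) A (B x))"
    proof (cases p)
      case 0
      then have "comm (Lmul n f) A = (\<lambda>_. 0)" using Suc.prems f by (simp add: ordp_0)
      then show ?thesis by (simp add: ordp_zero)
    next
      case (Suc p')
      then have "ordp n p' (comm (Lmul n f) A)" using \<open>ordp n p A\<close> f ordp_Suc by blast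
      moreover have "M = p' + q" using Suc \<open>Suc M = p + q\<close> by simp
      ultimately show ?thesis
        using Suc.hyps(1)[of p' q "comm (Lmul n f) A" B] End_comm[OF EL \<open>is_End n A\<close>] \<open>is_End n B\<close>
          \<open>ordp n q B\<close> by simp
    qed
    have o2: "ordp n M (\<lambda>x. A (comm (Lmul n f) B x))"
    proof (cases q)
      case 0
      then have "comm (Lmul n f) B = (\<lambda>_. 0)" using Suc.prems f by (simp add: ordp_0)
      then show ?thesis using End_zero[OF \<open>is_End n A\<close>] by (simp add: ordp_zero)
    next
      case (Suc q')
      then have "ordp n q' (comm (Lmul n f) B)" using \<open>ordp n q B\<close> f ordp_Suc by blast
      moreover have "M = p + q'" using Suc \<open>Suc M = p + q\<close> by simp
      ultimately show ?thesis
        using Suc.hyps(1)[of p q' A "comm (Lmul n f) B"] End_comm[OF EL \<open>is_End n B\<close>] \<open>is_End n A\<close>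
          \<open>ordp n p A\<close> by simp
    qed
    have "ordp n M (\<lambda>x. comm (Lmul n f) A (B x) + A (comm (Lmul n f) B x))"
      by (rule ordp_plus[OF _ _ o1 o2])
         (auto intro: End_comp End_comm EL Suc.prems)
    then show "ordp n M (comm (Lmul n f) (\<lambda>x. A (B x)))"
      by (simp add: comm_comp[OF EL Suc.prems(1,2)])
  qed
qed

lemma Lmul_Lmul: "p \<in> On n \<Longrightarrow> Lmul n f (Lmul n g p) = Lmul n (f * g) (p :: 'k::field poly)"
  using On_omult[of n g p] by (simp add: Lmul_def restr_def omult_def mod_mult_right_eq mult.assoc)

lemma Lmul_commute: "Lmul n f (Lmul n g p) = Lmul n g (Lmul n f (p :: 'k::field poly))"
  by (cases "p \<in> On n") (simp_all add: Lmul_Lmul mult.commute Lmul_out)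

lemma Lmul_add_fun: "Lmul n (f + g) p = Lmul n f p + Lmul n g (p :: 'k::field poly)"
  by (simp add: Lmul_def restr_def omult_def distrib_right poly_mod_add_left)

lemma Lmul_const: "p \<in> On n \<Longrightarrow> Lmul n [:a:] p = smult a (p :: 'k::field poly)"
proof -
  assume p: "p \<in> On n"
  have "degree (smult a p) < degree (monom (1::'k) (Suc n))"
    using p by (simp add: degree_monom_eq On_iff le_less_trans[OF degree_smult_le])
  then show ?thesis using p by (simp add: Lmul_def restr_def omult_def mod_poly_less)
qed

lemma Lmul_pCons: "p \<in> On n \<Longrightarrow> Lmul n (pCons a g) p = smult a p + Xop n (Lmul n g (p :: 'k::field poly))"
proof -
  assume p: "p \<in> On n"
  have "pCons a g = [:a:] + [:0, 1:] * g" by simp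
  then have "Lmul n (pCons a g) p = Lmul n [:a:] p + Lmul n ([:0, 1:] * g) p"
    by (simp only: Lmul_add_fun)
  also have "\<dots> = smult a p + Xop n (Lmul n g p)"
    using p by (simp add: Lmul_const Xop_def Lmul_Lmul)
  finally show ?thesis .
qed

lemma comm_Lmul_Lmul: "comm (Lmul n f) (Lmul n g) = (\<lambda>_. 0 :: 'k::field poly)"
  by (simp add: comm_def fun_eq_iff Lmul_commute)

lemma lemma_C:
  assumes \<delta>: "is_End n \<delta>" and x: "comm (Xop n) \<delta> = (\<lambda>_. 0 :: 'k::field poly)"
  shows "comm (Lmul n g) \<delta> = (\<lambda>_. 0)"
proof
  fix p :: "'k poly"
  have xc: "Xop n (\<delta> q) = \<delta> (Xop n q)" for q
    using fun_cong[OF x, of q] by (simp add: comm_def)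
  show "comm (Lmul n g) \<delta> p = 0"
  proof (cases "p \<in> On n")
    case False
    then show ?thesis by (simp add: comm_def End_out[OF \<delta>] Lmul_out End_zero[OF \<delta>])
  next
    case True
    have "Lmul n g (\<delta> p) = \<delta> (Lmul n g p)"
    proof (induction g rule: pCons_induct)
      case 0
      then show ?case using True by (simp add: Lmul_def restr_def omult_def End_zero[OF \<delta>])
    next
      case (pCons a g)
      have "Lmul n (pCons a g) (\<delta> p) = smult a (\<delta> p) + Xop n (Lmul n g (\<delta> p))"
        by (rule Lmul_pCons[OF End_On[OF \<delta>]])
      also have "\<dots> = smult a (\<delta> p) + \<delta> (Xop n (Lmul n g p))"
        by (simp add: pCons.IH xc)
      also have "\<dots> = \<delta> (smult a p + Xop n (Lmul n g p))"
        using True by (simp add: End_add[OF \<delta>] End_smult[OF \<delta>])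
      also have "\<dots> = \<delta> (Lmul n (pCons a g) p)"
        using True by (simp add: Lmul_pCons)
      finally show ?case .
    qed
    then show ?thesis by (simp add: comm_def)
  qed
qed

lemma lemma_J:
  assumes X: "is_End n X" and Y: "is_End n Y" and \<delta>: "is_End n \<delta>"
    and c: "\<And>p. X (Y p) = Y (X p)"
  shows "comm X (comm Y \<delta>) = comm Y (comm X (\<delta> :: 'k::field poly \<Rightarrow> _))"
proof
  fix p
  show "comm X (comm Y \<delta>) p = comm Y (comm X \<delta>) p"
    unfolding comm_def
    by (simp add: End_diff[OF X] End_diff[OF Y] End_On[OF \<delta>] End_On[OF X] End_On[OF Y] c)
qed

lemma Xop_Lmul: "Xop n = Lmul n [:0, 1:]"
  by (simp add: Xop_def fun_eq_iff)

lemma comm_Xop_H: "comm (Xop n) (gen_op n H) = (\<lambda>p. - smult 2 (Xop n (p :: 'k::field poly)))"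
proof
  fix p :: "'k poly"
  have "ev n (gH * gE - gE * gH - sc 2 * gE) p = 0" by (simp add: ev_R2)
  then have "gen_op n H (gen_op n E p) - gen_op n E (gen_op n H p) - smult 2 (gen_op n E p) = 0"
    by (simp add: ev_diff ev_mult ev_gE ev_gH ev_sc Idn_in del: gen_op.simps)
  then show "comm (Xop n) (gen_op n H) p = - smult 2 (Xop n p)"
    by (simp add: comm_def algebra_simps del: gen_op.simps) (simp add: algebra_simps)
qed

lemma comm_Xop_F: "comm (Xop n) (gen_op n F) = (gen_op n H :: 'k::field poly \<Rightarrow> _)"
proof
  fix p :: "'k poly"
  have "ev n (gE * gF - gF * gE - gH) p = 0" by (simp add: ev_R1)
  then have "gen_op n E (gen_op n F p) - gen_op n F (gen_op n E p) - gen_op n H p = 0"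
    by (simp only: ev_diff ev_mult ev_gE ev_gF ev_gH)
  then show "comm (Xop n) (gen_op n F) p = gen_op n H p"
    by (simp add: comm_def del: gen_op.simps) (simp add: algebra_simps)
qed

lemma End_Xop: "is_End n (Xop n :: 'k::field poly \<Rightarrow> _)"
  by (simp add: Xop_Lmul End_Lmul)

lemma Xop_Lmul_commute: "Xop n (Lmul n f p) = Lmul n f (Xop n (p :: 'k::field poly))"
  by (simp add: Xop_Lmul Lmul_commute)

lemma H_double: "comm (Lmul n g) (comm (Lmul n f) (gen_op n H)) = (\<lambda>_. 0 :: 'k::field poly)"
proof (rule lemma_C)
  have EH: "is_End n (gen_op n H :: 'k poly \<Rightarrow> _)" by (rule End_gen_op)
  show "is_End n (comm (Lmul n f) (gen_op n H :: 'k poly \<Rightarrow> _))" by (intro End_comm End_Lmul EH)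
  have "comm (Xop n) (comm (Lmul n f) (gen_op n H)) = comm (Lmul n f) (comm (Xop n) (gen_op n H :: 'k poly \<Rightarrow> _))"
    by (rule lemma_J[where X="Xop n" and Y="Lmul n f", OF End_Xop End_Lmul EH Xop_Lmul_commute])
  also have "\<dots> = (\<lambda>_. 0)"
  proof
    fix q :: "'k poly"
    have "Lmul n f (- smult 2 (Xop n q)) = - smult 2 (Lmul n f (Xop n q))"
      by (simp add: End_uminus[OF End_Lmul] End_smult[OF End_Lmul])
    then show "comm (Lmul n f) (comm (Xop n) (gen_op n H)) q = 0"
      unfolding comm_Xop_H unfolding comm_def by (simp add: Xop_Lmul_commute)
  qed
  finally show "comm (Xop n) (comm (Lmul n f) (gen_op n H :: 'k poly \<Rightarrow> _)) = (\<lambda>_. 0)" .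
qed

lemma ordp_E: "ordp n 0 (gen_op n E :: 'k::field poly \<Rightarrow> _)"
  by (simp add: ordp_0 Xop_Lmul comm_Lmul_Lmul)

lemma ordp_H: "ordp n 1 (gen_op n H :: 'k::field poly \<Rightarrow> _)"
  by (simp add: ordp_Suc ordp_0 H_double del: gen_op.simps)

lemma ordp_F: "ordp n 2 (gen_op n F :: 'k::field poly \<Rightarrow> _)"
proof -
  have "comm (Lmul n h) (comm (Lmul n g) (comm (Lmul n f) (gen_op n F))) = (\<lambda>_. 0 :: 'k poly)" for f g h
  proof (rule lemma_C)
    have EF: "is_End n (gen_op n F :: 'k poly \<Rightarrow> _)" by (rule End_gen_op)
    show "is_End n (comm (Lmul n g) (comm (Lmul n f) (gen_op n F :: 'k poly \<Rightarrow> _)))"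
      by (intro End_comm End_Lmul EF)
    have "comm (Xop n) (comm (Lmul n g) (comm (Lmul n f) (gen_op n F :: 'k poly \<Rightarrow> _))) =
        comm (Lmul n g) (comm (Xop n) (comm (Lmul n f) (gen_op n F)))"
      by (rule lemma_J[where X="Xop n" and Y="Lmul n g", OF End_Xop End_Lmul _ Xop_Lmul_commute]) (intro End_comm End_Lmul EF)
    also have "comm (Xop n) (comm (Lmul n f) (gen_op n F :: 'k poly \<Rightarrow> _)) =
        comm (Lmul n f) (comm (Xop n) (gen_op n F))"
      by (rule lemma_J[where X="Xop n" and Y="Lmul n f", OF End_Xop End_Lmul EF Xop_Lmul_commute])
    also have "comm (Xop n) (gen_op n F) = (gen_op n H :: 'k poly \<Rightarrow> _)" by (rule comm_Xop_F)
    also have "comm (Lmul n g) (comm (Lmul n f) (gen_op n H)) = (\<lambda>_. 0 :: 'k poly)" by (rule H_double)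
    finally show "comm (Xop n) (comm (Lmul n g) (comm (Lmul n f) (gen_op n F :: 'k poly \<Rightarrow> _))) = (\<lambda>_. 0)" .
  qed
  then show ?thesis by (simp add: ordp_Suc ordp_0 numeral_2_eq_2 del: gen_op.simps)
qed

lemma ordp_gen: "ordp n (gen_weight g) (gen_op n g :: 'k::field poly \<Rightarrow> _)"
  by (cases g) (simp_all only: gen_weight.simps ordp_E ordp_H ordp_F)

lemma ordp_Idn: "ordp n 0 (Idn n :: 'k::field poly \<Rightarrow> _)"
  unfolding ordp_0
proof (intro ballI)
  fix f :: "'k poly"
  show "comm (Lmul n f) (Idn n) = (\<lambda>_. 0)"
    by (auto simp: comm_def fun_eq_iff Idn_def restr_def Lmul_out)
qed

lemma ordp_word: "ordp n (weight w) (word_op n w :: 'k::field poly \<Rightarrow> _)"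
proof (induction w)
  case Nil
  then show ?case by (simp add: weight_def ordp_Idn)
next
  case (Cons g w)
  have "ordp n (gen_weight g + weight w) (\<lambda>x. gen_op n g (word_op n w x) :: 'k poly)"
    by (rule ordp_comp[OF End_gen_op End_word_op ordp_gen Cons.IH])
  then show ?case by (simp add: weight_def del: gen_op.simps)
qed

lemma word_Diff: "weight w \<le> p \<Longrightarrow> (word_op n w :: 'k::field poly \<Rightarrow> _) \<in> Diff n p"
  by (simp add: Diff_iff End_word_op ordp_mono[OF ordp_word])

theorem theorem2:
  fixes n :: nat
  shows "(\<forall>w p. weight w \<le> p \<longrightarrow> (word_op n w :: 'k::field_char_0 poly \<Rightarrow> 'k poly) \<in> Diff n p)
    \<and> (\<forall>\<delta> \<in> (Diff_ops n :: ('k poly \<Rightarrow> 'k poly) set). \<exists>a. fin_supp a \<and> fa_eval n a = \<delta>)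
    \<and> (\<forall>a :: 'k fa. fin_supp a \<longrightarrow>
         (fa_eval n a = (\<lambda>_. 0) \<longleftrightarrow>
          a \<in> fa_ideal (sl2_relations \<union>
                 {fa_sub casimir (fa_const (of_nat (n * (n + 2)))),
                  fa_word (replicate (Suc n) E)})))"
proof (intro conjI allI impI ballI)
  fix w p assume "weight w \<le> p"
  then show "(word_op n w :: 'k poly \<Rightarrow> 'k poly) \<in> Diff n p" by (rule word_Diff)
next
  fix \<delta> :: "'k poly \<Rightarrow> 'k poly" assume "\<delta> \<in> Diff_ops n"
  then have "is_End n \<delta>" by (auto simp: Diff_ops_def Diff_def)
  then obtain x :: "'k FA" where "ev n x = \<delta>" using surj_ev by blast
  then show "\<exists>a. fin_supp a \<and> fa_eval n a = \<delta>"
    using repFA[of x] by (intro exI[of _ "repFA x"]) (simp add: ev_def)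
next
  fix a :: "'k fa" assume a: "fin_supp a"
  have ra: "repFA (absFA a) = a" using a by (simp add: absFA_inverse)
  have S: "sl2_relations \<union> {fa_sub casimir (fa_const (of_nat (n * (n + 2)))), fa_word (replicate (Suc n) E)}
      = (Sgen n :: 'k fa set)" by (simp add: Sgen_def)
  show "(fa_eval n a = (\<lambda>_. 0)) \<longleftrightarrow>
          a \<in> fa_ideal (sl2_relations \<union>
                 {fa_sub casimir (fa_const (of_nat (n * (n + 2)))),
                  fa_word (replicate (Suc n) E)})"
    unfolding S
  proof
    assume "fa_eval n a = (\<lambda>_. 0)"
    then have "ev n (absFA a) = (\<lambda>_. 0)" by (simp add: ev_def ra)
    then have "absFA a \<in> J n" by (rule ker_J)
    then show "a \<in> fa_ideal (Sgen n)" by (simp add: J_def ra)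
  next
    assume "a \<in> fa_ideal (Sgen n)"
    then show "fa_eval n a = (\<lambda>_. 0)" using ideal_ker by blast
  qed
qed

end
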